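(* Let $\alpha=\frac{r}{s}+k\sqrt{p/q}$ be a positive irrational, where $r\in\mathbb Z$, $p,q,s\in\mathbb N$, $k\in\{-1,1\}$, $s$ even, $\gcd(r,s)=1$, $\gcd(p,q)=1$. Let $d_1=\gcd(ps^2-qr^2,2qs)$, $N=\frac{pqs^4}{d_1^2}$ and $M=\frac{4pqs^4}{d_1^2}$. For $A\in GL(2,\mathbb Z)$, $\pi(A)$ restricts to an isometric automorphism of $\mathcal A_\alpha$ if and only if $A=T^n$ for some $n\in\mathbb Z$, where $T$ is as follows: (1) if $d_1\mid qs$ and $x^2-Ny^2=-1$ has no integer solution, $T=\begin{bmatrix} -\frac{qrs}{d_1}y_1+x_1 & \frac{qs^2}{d_1}y_1\\ \frac{ps^2-qr^2}{d_1}y_1 & \frac{qrs}{d_1}y_1+x_1\end{bmatrix}$ with $(x_1,y_1)$ the fundamental solution of $x^2-Ny^2=1$; (2) if $d_1\mid qs$ and $x^2-Ny^2=-1$ has an integer solution, $T=\begin{bmatrix} -\frac{qrs}{d_1}ky_1'+x_1' & \frac{qs^2}{d_1}ky_1'\\ \frac{ps^2-qr^2}{d_1}ky_1' & \frac{qrs}{d_1}ky_1'+x_1'\end{bmatrix}$ with $(x_1',y_1')$ the fundamental solution of $x^2-Ny^2=-1$; (3) if $d_1\nmid qs$ and $x^2-My^2=-4$ has no integer solution, $T=\begin{bmatrix} -\frac{qrs}{d_1}y_1+\frac{x_1}{2} & \frac{qs^2}{d_1}y_1\\ \frac{ps^2-qr^2}{d_1}y_1 & \frac{qrs}{d_1}y_1+\frac{x_1}{2}\end{bmatrix}$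 with $(x_1,y_1)$ the fundamental solution of $x^2-My^2=4$; (4) if $d_1\nmid qs$ and $x^2-My^2=-4$ has an integer solution, $T=\begin{bmatrix} -\frac{qrs}{d_1}ky_1'+\frac{x_1'}{2} & \frac{qs^2}{d_1}ky_1'\\ \frac{ps^2-qr^2}{d_1}ky_1' & \frac{qrs}{d_1}ky_1'+\frac{x_1'}{2}\end{bmatrix}$ with $(x_1',y_1')$ the fundamental solution of $x^2-My^2=-4$. (In cases (1),(2), $N$ is a positive nonsquare integer; in cases (3),(4), $M$ is a positive nonsquare integer.)
   Context: For a positive irrational $\alpha$, $\mathcal A_\alpha=\{f\in C(\mathbb T^2): \hat f(m,n)=0 \text{ whenever } m+\alpha n<0\}$ ($\mathbb T$ the unit circle, $\hat f$ the Fourier transform on $\mathbb Z^2$), a uniform algebra with the sup norm. For $A=\begin{bmatrix} a&b\\ c&d\end{bmatrix}\in GL(2,\mathbb Z)$, $\pi(A)(f)=f\circ\varphi$ with $\varphi(z,w)=(z^aw^b,z^cw^d)$. For a positive nonsquare integer $N$ and $e\in\{1,-1,4,-4\}$, the fundamental solution of $x^2-Ny^2=e$ (when a solution in positive integers exists) is the solution $(x_1,y_1)$ in positive integers with $x_1$ smallest. *)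

theory Defs
  imports "HOL-Analysis.Analysis"
begin

definition torus :: "(complex \<times> complex) set" where
  "torus = {(z, w). cmod z = 1 \<and> cmod w = 1}"

definition fourier2 :: "(complex \<times> complex \<Rightarrow> complex) \<Rightarrow> int \<Rightarrow> int \<Rightarrow> complex" where
  "fourier2 f m n =
     integral (cbox ((0::real), (0::real)) (2 * pi, 2 * pi))
       (\<lambda>x. f (cis (fst x), cis (snd x)) * cis (- (of_int m * fst x + of_int n * snd x)))
     / (4 * of_real (pi ^ 2))"

definition A_alpha :: "real \<Rightarrow> (complex \<times> complex \<Rightarrow> complex) set" where
  "A_alpha \<alpha> = {f. f \<in> extensional torus \<and> continuous_on torus f \<and>
       (\<forall>m n. real_of_int m + \<alpha> * real_of_int n < 0 \<longrightarrow> fourier2 f m n = 0)}"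

definition sup_norm :: "(complex \<times> complex \<Rightarrow> complex) \<Rightarrow> real" where
  "sup_norm f = Sup ((\<lambda>x. cmod (f x)) ` torus)"

definition phiA :: "int^2^2 \<Rightarrow> complex \<times> complex \<Rightarrow> complex \<times> complex" where
  "phiA A = (\<lambda>(z, w). (z powi (A$1$1) * w powi (A$1$2), z powi (A$2$1) * w powi (A$2$2)))"

definition piA :: "int^2^2 \<Rightarrow> (complex \<times> complex \<Rightarrow> complex) \<Rightarrow> (complex \<times> complex \<Rightarrow> complex)" where
  "piA A f = restrict (f \<circ> phiA A) torus"

definition GL2Z :: "(int^2^2) set" where
  "GL2Z = {A. \<bar>det A\<bar> = 1}"

definition isometric_automorphism :: "real \<Rightarrow> int^2^2 \<Rightarrow> bool" where
  "isometric_automorphism \<alpha> A \<longleftrightarrow>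
     bij_betw (piA A) (A_alpha \<alpha>) (A_alpha \<alpha>) \<and>
     (\<forall>f\<in>A_alpha \<alpha>. sup_norm (piA A f) = sup_norm f)"

definition fundamental_solution :: "real \<Rightarrow> int \<Rightarrow> int \<Rightarrow> int \<Rightarrow> bool" where
  "fundamental_solution N e x y \<longleftrightarrow>
     x > 0 \<and> y > 0 \<and> real_of_int x ^ 2 - N * real_of_int y ^ 2 = of_int e \<and>
     (\<forall>x' y'. x' > 0 \<and> y' > 0 \<and> real_of_int x' ^ 2 - N * real_of_int y' ^ 2 = of_int e
        \<longrightarrow> x \<le> x')"

definition has_int_solution :: "real \<Rightarrow> int \<Rightarrow> bool" where
  "has_int_solution N e \<longleftrightarrow> (\<exists>x y::int. real_of_int x ^ 2 - N * real_of_int y ^ 2 = of_int e)"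

definition real_mat :: "int^2^2 \<Rightarrow> real^2^2" where
  "real_mat A = (\<chi> i j. real_of_int (A$i$j))"

primrec mat_pow :: "'a::semiring_1^'n^'n \<Rightarrow> nat \<Rightarrow> 'a^'n^'n" where
  "mat_pow T 0 = mat 1"
| "mat_pow T (Suc n) = T ** mat_pow T n"

text \<open>A = T^n for some integer n (negative powers via the inverse).\<close>
definition is_int_power :: "real^2^2 \<Rightarrow> real^2^2 \<Rightarrow> bool" where
  "is_int_power A T \<longleftrightarrow> (\<exists>n::nat. A = mat_pow T n \<or> A ** mat_pow T n = mat 1)"

definition Tmat :: "real \<Rightarrow> real \<Rightarrow> real \<Rightarrow> real \<Rightarrow> real \<Rightarrow> real \<Rightarrow> real \<Rightarrow> real^2^2" where
  "Tmat p q r s d1 u v =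
     vector [vector [- (q * r * s / d1) * u + v, (q * s ^ 2 / d1) * u],
             vector [((p * s ^ 2 - q * r ^ 2) / d1) * u, (q * r * s / d1) * u + v]]"

definition d1f :: "nat \<Rightarrow> nat \<Rightarrow> int \<Rightarrow> nat \<Rightarrow> int" where
  "d1f p q r s = gcd (int p * int s ^ 2 - int q * r ^ 2) (2 * int q * int s)"

end

theory Submission
  imports Defs
begin


lemma integral_cis_1d:
  "integral {0..2*pi} (\<lambda>t. cis (of_int j * t)) = (if j = 0 then complex_of_real (2*pi) else 0)"
proof (cases "j = 0")
  case True then show ?thesis by (simp add: scaleR_conv_of_real)
next
  case False
  have a: "\<i> * of_int j \<noteq> (0::complex)" using False by simp
  have "integral {0..2*pi} (\<lambda>t. exp ((\<i> * of_int j) * complex_of_real t)) =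
        (exp ((\<i> * of_int j) * of_real (2*pi)) - 1) / (\<i> * of_int j)"
    by (rule integral_exp) (use a in auto)
  also have "exp ((\<i> * of_int j) * of_real (2*pi)) = 1"
  proof -
    have "exp ((\<i> * of_int j) * of_real (2*pi)) = cis (2 * pi * of_int j)"
      by (simp add: cis_conv_exp algebra_simps)
    also have "\<dots> = 1" by (rule cis_multiple_2pi) simp
    finally show ?thesis .
  qed
  finally have "integral {0..2*pi} (\<lambda>t. exp ((\<i> * of_int j) * complex_of_real t)) = 0" by simp
  moreover have "(\<lambda>t. cis (of_int j * t)) = (\<lambda>t. exp ((\<i> * of_int j) * complex_of_real t))"
    by (auto simp: cis_conv_exp algebra_simps)
  ultimately show ?thesis using False by simp
qed

lemma integral_cis_2d:
  "integral (cbox ((0::real),(0::real)) (2*pi,2*pi)) (\<lambda>t. cis (of_int j * fst t + of_int l * snd t))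
     = (if j = 0 \<and> l = 0 then complex_of_real (4*pi^2) else 0)"
proof -
  have cont: "continuous_on (cbox ((0::real),(0::real)) (2*pi,2*pi)) (\<lambda>t. cis (of_int j * fst t + of_int l * snd t))"
    by (intro continuous_intros)
  have "integral (cbox ((0::real),(0::real)) (2*pi,2*pi)) (\<lambda>t. cis (of_int j * fst t + of_int l * snd t))
      = integral (cbox 0 (2*pi)) (\<lambda>x. integral (cbox 0 (2*pi)) (\<lambda>y. cis (of_int j * fst (x,y) + of_int l * snd (x,y))))"
    by (rule integral_prod_continuous[OF cont])
  also have "\<dots> = integral {0..2*pi} (\<lambda>x. cis (of_int j * x) * integral {0..2*pi} (\<lambda>y. cis (of_int l * y)))"
    by (simp add: cis_mult[symmetric])
  also have "\<dots> = integral {0..2*pi} (\<lambda>x. cis (of_int j * x)) * integral {0..2*pi} (\<lambda>y. cis (of_int l * y))"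
    by (simp add: integral_mult_left)
  also have "\<dots> = (if j = 0 \<and> l = 0 then complex_of_real (4*pi^2) else 0)"
    by (simp add: integral_cis_1d power2_eq_square)
  finally show ?thesis .
qed


definition mnm :: "int \<Rightarrow> int \<Rightarrow> complex \<times> complex \<Rightarrow> complex" where
  "mnm j l x = fst x powi j * snd x powi l"

definition Iint :: "(complex \<times> complex \<Rightarrow> complex) \<Rightarrow> complex" where
  "Iint G = integral (cbox ((0::real),(0::real)) (2*pi,2*pi)) (\<lambda>t. G (cis (fst t), cis (snd t)))"

lemma cis_in_torus: "(cis x, cis y) \<in> torus"
  by (simp add: torus_def)

lemma torus_nz: "x \<in> torus \<Longrightarrow> fst x \<noteq> 0 \<and> snd x \<noteq> 0"
  by (auto simp: torus_def)

lemma mnm_cis: "mnm j l (cis x, cis y) = cis (of_int j * x + of_int l * y)"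
  by (simp add: mnm_def cis_power_int cis_mult)

lemma Iint_mnm: "Iint (mnm j l) = (if j = 0 \<and> l = 0 then complex_of_real (4*pi^2) else 0)"
  unfolding Iint_def by (simp add: mnm_cis integral_cis_2d)

lemma fourier2_Iint:
  "fourier2 f m n = Iint (\<lambda>x. f x * mnm (-m) (-n) x) / (4 * of_real (pi ^ 2))"
proof -
  have "\<And>t. cis (- (of_int m * fst t + of_int n * snd t)) = mnm (-m) (-n) (cis (fst t), cis (snd t))"
    by (simp add: mnm_cis algebra_simps)
  then show ?thesis unfolding fourier2_def Iint_def by simp
qed

lemma phi_apply: "phiA A x = (fst x powi (A$1$1) * snd x powi (A$1$2), fst x powi (A$2$1) * snd x powi (A$2$2))"
  by (cases x) (simp add: phiA_def)

lemma mnm_phi: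
  assumes "fst x \<noteq> 0" "snd x \<noteq> 0"
  shows "mnm j l (phiA A x) = mnm (A$1$1 * j + A$2$1 * l) (A$1$2 * j + A$2$2 * l) x"
  using assms
  by (simp add: mnm_def phi_apply power_int_mult_distrib power_int_add power_int_mult[symmetric]
      mult.commute mult.left_commute mult.assoc)

lemma phi_torus: "x \<in> torus \<Longrightarrow> phiA A x \<in> torus"
  by (auto simp: torus_def phi_apply norm_mult norm_power_int)

lemma phi_comp:
  assumes "fst x \<noteq> 0" "snd x \<noteq> 0"
  shows "phiA A (phiA B x) = phiA (A ** B) x"
  using assms
  by (simp add: phi_apply matrix_matrix_mult_def sum_2 power_int_mult_distrib power_int_add
       power_int_mult[symmetric] mult.commute mult.left_commute mult.assoc)

lemma phi_id: "phiA (mat 1) x = x"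
  by (simp add: phi_apply mat_def)

lemma phi_cont: "continuous_on torus (phiA A)"
proof -
  have "continuous_on torus (\<lambda>x. (fst x powi (A$1$1) * snd x powi (A$1$2), fst x powi (A$2$1) * snd x powi (A$2$2)))"
    using torus_nz by (intro continuous_intros) auto
  then show ?thesis by (simp add: phi_apply[abs_def])
qed

lemma mnm_cont: "continuous_on torus (mnm j l)"
proof -
  have "continuous_on torus (\<lambda>x. fst x powi j * snd x powi l)"
    using torus_nz by (intro continuous_intros) auto
  then show ?thesis by (simp add: mnm_def[abs_def])
qed


inductive trig :: "(complex \<times> complex \<Rightarrow> complex) \<Rightarrow> bool" where
  tmono: "trig (\<lambda>x. c * mnm j l x)"
| tadd: "trig f \<Longrightarrow> trig g \<Longrightarrow> trig (\<lambda>x. f x + g x)"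

definition TPt :: "(complex \<times> complex \<Rightarrow> complex) \<Rightarrow> bool" where
  "TPt h \<longleftrightarrow> (\<exists>g. trig g \<and> (\<forall>x\<in>torus. h x = g x))"

lemma trig_cont: "trig f \<Longrightarrow> continuous_on torus f"
  by (induction rule: trig.induct) (auto intro!: continuous_intros mnm_cont)

lemma trig_mult_mono:
  assumes "trig g" shows "TPt (\<lambda>x. (c * mnm j l x) * g x)"
  using assms
proof (induction rule: trig.induct)
  case (tmono c' j' l')
  have "\<forall>x\<in>torus. (c * mnm j l x) * (c' * mnm j' l' x) = (c*c') * mnm (j+j') (l+l') x"
    using torus_nz by (auto simp: mnm_def power_int_add)
  then show ?case unfolding TPt_def by (intro exI[of _ "\<lambda>x. (c*c') * mnm (j+j') (l+l') x"]) (auto intro: trig.intros)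
next
  case (tadd f g)
  then obtain h1 h2 where "trig h1" "\<forall>x\<in>torus. (c * mnm j l x) * f x = h1 x"
    "trig h2" "\<forall>x\<in>torus. (c * mnm j l x) * g x = h2 x" unfolding TPt_def by blast
  then show ?case unfolding TPt_def
    by (intro exI[of _ "\<lambda>x. h1 x + h2 x"]) (auto intro: trig.intros simp: distrib_left)
qed

lemma trig_mult:
  assumes "trig f" "trig g" shows "TPt (\<lambda>x. f x * g x)"
  using assms(1)
proof (induction rule: trig.induct)
  case (tmono c j l)
  then show ?case using trig_mult_mono[OF assms(2)] by simp
next
  case (tadd f1 f2)
  then obtain h1 h2 where "trig h1" "\<forall>x\<in>torus. f1 x * g x = h1 x"
    "trig h2" "\<forall>x\<in>torus. f2 x * g x = h2 x" unfolding TPt_def by blast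
  then show ?case unfolding TPt_def
    by (intro exI[of _ "\<lambda>x. h1 x + h2 x"]) (auto intro: trig.intros simp: distrib_right)
qed

lemma TPt_mult: "TPt f \<Longrightarrow> TPt g \<Longrightarrow> TPt (\<lambda>x. f x * g x)"
proof -
  assume "TPt f" "TPt g"
  then obtain f' g' where f': "trig f'" "\<forall>x\<in>torus. f x = f' x" and g': "trig g'" "\<forall>x\<in>torus. g x = g' x"
    unfolding TPt_def by blast
  from trig_mult[OF f'(1) g'(1)] obtain h where "trig h" "\<forall>x\<in>torus. f' x * g' x = h x"
    unfolding TPt_def by blast
  then show ?thesis using f' g' unfolding TPt_def by (intro exI[of _ h]) auto
qed

lemma TPt_add: "TPt f \<Longrightarrow> TPt g \<Longrightarrow> TPt (\<lambda>x. f x + g x)"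
  unfolding TPt_def by (metis (no_types, lifting) trig.tadd)

lemma TPt_const: "TPt (\<lambda>x. c)"
  unfolding TPt_def by (intro exI[of _ "\<lambda>x. c * mnm 0 0 x"] conjI) (rule trig.tmono, simp add: mnm_def)

lemma TPt_mnm: "TPt (mnm j l)"
  unfolding TPt_def by (intro exI[of _ "\<lambda>x. 1 * mnm j l x"] conjI) (rule trig.tmono, simp)

lemma ii_aux: "-(\<i> * (y * \<i>)) = (y::complex)"
  by (simp add: complex_eq_iff)

lemma torus_inverse:
  assumes "cmod z = 1" shows "inverse z = cnj z"
proof -
  have "z * cnj z = 1" using complex_norm_square[of z] assms by simp
  then show ?thesis by (metis inverse_unique)
qed

lemma TPt_Re1: "TPt (\<lambda>x. complex_of_real (Re (fst x)))"
proof -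
  have "TPt (\<lambda>x. (1/2) * (mnm 1 0 x + mnm (-1) 0 x))"
    by (intro TPt_mult TPt_add TPt_const TPt_mnm)
  moreover have "\<forall>x\<in>torus. (1/2) * (mnm 1 0 x + mnm (-1) 0 x) = complex_of_real (Re (fst x))"
    by (auto simp: torus_def mnm_def power_int_minus torus_inverse complex_add_cnj)
  ultimately show ?thesis unfolding TPt_def by metis
qed

lemma TPt_Im1: "TPt (\<lambda>x. complex_of_real (Im (fst x)))"
proof -
  have "TPt (\<lambda>x. (1/(2*\<i>)) * (mnm 1 0 x - mnm (-1) 0 x))"
  proof -
    have "TPt (\<lambda>x. (1/(2*\<i>)) * (mnm 1 0 x + (-1) * mnm (-1) 0 x))"
      by (intro TPt_mult TPt_add TPt_const TPt_mnm)
    then show ?thesis by simp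
  qed
  moreover have "\<forall>x\<in>torus. (1/(2*\<i>)) * (mnm 1 0 x - mnm (-1) 0 x) = complex_of_real (Im (fst x))"
    by (auto simp: torus_def mnm_def power_int_minus torus_inverse complex_diff_cnj ii_aux)
  ultimately show ?thesis unfolding TPt_def by metis
qed

lemma TPt_Re2: "TPt (\<lambda>x. complex_of_real (Re (snd x)))"
proof -
  have "TPt (\<lambda>x. (1/2) * (mnm 0 1 x + mnm 0 (-1) x))"
    by (intro TPt_mult TPt_add TPt_const TPt_mnm)
  moreover have "\<forall>x\<in>torus. (1/2) * (mnm 0 1 x + mnm 0 (-1) x) = complex_of_real (Re (snd x))"
    by (auto simp: torus_def mnm_def power_int_minus torus_inverse complex_add_cnj)
  ultimately show ?thesis unfolding TPt_def by metis
qed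

lemma TPt_Im2: "TPt (\<lambda>x. complex_of_real (Im (snd x)))"
proof -
  have "TPt (\<lambda>x. (1/(2*\<i>)) * (mnm 0 1 x - mnm 0 (-1) x))"
  proof -
    have "TPt (\<lambda>x. (1/(2*\<i>)) * (mnm 0 1 x + (-1) * mnm 0 (-1) x))"
      by (intro TPt_mult TPt_add TPt_const TPt_mnm)
    then show ?thesis by simp
  qed
  moreover have "\<forall>x\<in>torus. (1/(2*\<i>)) * (mnm 0 1 x - mnm 0 (-1) x) = complex_of_real (Im (snd x))"
    by (auto simp: torus_def mnm_def power_int_minus torus_inverse complex_diff_cnj ii_aux)
  ultimately show ?thesis unfolding TPt_def by metis
qed

lemma bounded_linear_decomp:
  fixes h :: "complex \<times> complex \<Rightarrow> real"
  assumes "bounded_linear h"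
  shows "h x = Re (fst x) * h (1,0) + Im (fst x) * h (\<i>,0) + Re (snd x) * h (0,1) + Im (snd x) * h (0,\<i>)"
proof -
  interpret linear h using assms by (rule bounded_linear.linear)
  have "x = Re (fst x) *\<^sub>R (1,0) + Im (fst x) *\<^sub>R (\<i>,0) + Re (snd x) *\<^sub>R (0,1) + Im (snd x) *\<^sub>R (0,\<i>)"
    by (cases x) (simp add: complex_eq_iff)
  then have "h x = h (Re (fst x) *\<^sub>R (1,0) + Im (fst x) *\<^sub>R (\<i>,0) + Re (snd x) *\<^sub>R (0,1) + Im (snd x) *\<^sub>R (0,\<i>))"
    by simp
  also have "\<dots> = Re (fst x) * h (1,0) + Im (fst x) * h (\<i>,0) + Re (snd x) * h (0,1) + Im (snd x) * h (0,\<i>)"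
    by (simp only: add scale real_scaleR_def)
  finally show ?thesis .
qed

lemma rpf_TPt:
  fixes h :: "complex \<times> complex \<Rightarrow> real"
  assumes "real_polynomial_function h"
  shows "TPt (\<lambda>x. complex_of_real (h x))"
  using assms
proof (induction rule: real_polynomial_function.induct)
  case (linear f)
  have "TPt (\<lambda>x. complex_of_real (Re (fst x)) * of_real (f (1,0)) + complex_of_real (Im (fst x)) * of_real (f (\<i>,0))
      + complex_of_real (Re (snd x)) * of_real (f (0,1)) + complex_of_real (Im (snd x)) * of_real (f (0,\<i>)))"
    by (intro TPt_add TPt_mult TPt_const TPt_Re1 TPt_Im1 TPt_Re2 TPt_Im2)
  then show ?case by (subst bounded_linear_decomp[OF linear]) simp
next
  case (const c) then show ?case by (rule TPt_const)
next
  case (add f g) then show ?case by (simp add: TPt_add)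
next
  case (mult f g) then show ?case by (simp add: TPt_mult)
qed

lemma poly_TPt:
  fixes g :: "complex \<times> complex \<Rightarrow> complex"
  assumes "polynomial_function g"
  shows "TPt g"
proof -
  have "real_polynomial_function (Re \<circ> g)" "real_polynomial_function (Im \<circ> g)"
    using assms bounded_linear_Re bounded_linear_Im unfolding polynomial_function_def by blast+
  then have "TPt (\<lambda>x. complex_of_real (Re (g x)) + \<i> * complex_of_real (Im (g x)))"
    by (intro TPt_add TPt_mult TPt_const) (auto dest: rpf_TPt simp: o_def)
  then show ?thesis by (simp add: complex_eq[symmetric])
qed


abbreviation "BOX \<equiv> cbox ((0::real),(0::real)) (2*pi,2*pi)"

lemma cont_cis_pair:
  assumes "continuous_on torus f"
  shows "continuous_on S (\<lambda>t. f (cis (fst t), cis (snd t)))"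
proof (rule continuous_on_compose2[OF assms])
  show "continuous_on S (\<lambda>t::real\<times>real. (cis (fst t), cis (snd t)))"
    by (intro continuous_intros)
  show "(\<lambda>t::real\<times>real. (cis (fst t), cis (snd t))) ` S \<subseteq> torus" by (auto simp: cis_in_torus)
qed

lemma Iint_integrable:
  fixes f :: "complex \<times> complex \<Rightarrow> complex"
  assumes "continuous_on torus f"
  shows "(\<lambda>t. f (cis (fst t), cis (snd t))) integrable_on BOX"
  by (rule Henstock_Kurzweil_Integration.integrable_continuous) (rule cont_cis_pair[OF assms])

lemma Iint_diff:
  assumes "continuous_on torus f" "continuous_on torus g"
  shows "Iint (\<lambda>x. f x - g x) = Iint f - Iint g"
  unfolding Iint_def
  by (rule Henstock_Kurzweil_Integration.integral_diff[OF Iint_integrable[OF assms(1)] Iint_integrable[OF assms(2)]])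

lemma Iint_add:
  assumes "continuous_on torus f" "continuous_on torus g"
  shows "Iint (\<lambda>x. f x + g x) = Iint f + Iint g"
  unfolding Iint_def
  by (rule Henstock_Kurzweil_Integration.integral_add[OF Iint_integrable[OF assms(1)] Iint_integrable[OF assms(2)]])

lemma Iint_cong: "(\<And>x. x \<in> torus \<Longrightarrow> f x = g x) \<Longrightarrow> Iint f = Iint g"
  unfolding Iint_def by (simp add: cis_in_torus)

lemma Iint_cmult: "Iint (\<lambda>x. c * f x) = c * Iint f"
  unfolding Iint_def by (rule Henstock_Kurzweil_Integration.integral_mult_right)

lemma Iint_bound:
  assumes "continuous_on torus f" "0 \<le> B" "\<And>x. x \<in> torus \<Longrightarrow> norm (f x) \<le> B"
  shows "norm (Iint f) \<le> B * Henstock_Kurzweil_Integration.content BOX"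
  unfolding Iint_def
  by (rule has_integral_bound[OF assms(2) integrable_integral[OF Iint_integrable[OF assms(1)]]])
     (use assms(3) cis_in_torus in auto)

lemma compact_torus: "compact torus"
proof -
  have "torus = sphere 0 1 \<times> sphere 0 1" by (auto simp: torus_def)
  then show ?thesis by (metis compact_Times compact_sphere)
qed

lemma phi_cont_comp:
  assumes "continuous_on torus F"
  shows "continuous_on torus (\<lambda>x. F (phiA A x))"
  by (rule continuous_on_compose2[OF assms phi_cont]) (auto intro: phi_torus)

lemma lin_zero:
  fixes A :: "int^2^2"
  assumes "det A \<noteq> 0"
  shows "(A$1$1 * j + A$2$1 * l = 0 \<and> A$1$2 * j + A$2$2 * l = 0) \<longleftrightarrow> (j = 0 \<and> l = 0)"
proof
  assume h: "A$1$1 * j + A$2$1 * l = 0 \<and> A$1$2 * j + A$2$2 * l = 0"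
  have e1: "det A * j = A$2$2 * (A$1$1 * j + A$2$1 * l) - A$2$1 * (A$1$2 * j + A$2$2 * l)"
    by (simp add: det_2 algebra_simps)
  have e2: "det A * l = A$1$1 * (A$1$2 * j + A$2$2 * l) - A$1$2 * (A$1$1 * j + A$2$1 * l)"
    by (simp add: det_2 algebra_simps)
  have h1: "A$1$1 * j + A$2$1 * l = 0" and h2: "A$1$2 * j + A$2$2 * l = 0" using h by auto
  have "det A * j = 0" unfolding e1 h1 h2 by simp
  moreover have "det A * l = 0" unfolding e2 h1 h2 by simp
  ultimately show "j = 0 \<and> l = 0" using assms by simp
qed simp

lemma trig_haar:
  fixes A :: "int^2^2"
  assumes "det A \<noteq> 0" "trig f"
  shows "Iint (\<lambda>x. f (phiA A x)) = Iint f"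
  using assms(2)
proof (induction rule: trig.induct)
  case (tmono c j l)
  have "Iint (\<lambda>x. c * mnm j l (phiA A x)) = Iint (\<lambda>x. c * mnm (A$1$1 * j + A$2$1 * l) (A$1$2 * j + A$2$2 * l) x)"
    by (rule Iint_cong) (simp add: mnm_phi torus_nz)
  then show ?case by (simp add: Iint_cmult Iint_mnm lin_zero[OF assms(1)])
next
  case (tadd f g)
  have cf: "continuous_on torus f" "continuous_on torus g" using tadd.hyps trig_cont by auto
  show ?case
    using tadd.IH Iint_add[OF cf] Iint_add[OF phi_cont_comp[OF cf(1)] phi_cont_comp[OF cf(2)]]
    by simp
qed

lemma small_zero:
  fixes z :: complex
  assumes "\<And>e. e > 0 \<Longrightarrow> norm z \<le> e * K" "K \<ge> 0"
  shows "z = 0"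
proof (rule ccontr)
  assume "z \<noteq> 0"
  then have n: "norm z > 0" by simp
  have "norm z \<le> (norm z / (2*(K+1))) * K" using assms(1)[of "norm z / (2*(K+1))"] n assms(2) by simp
  also have "\<dots> < norm z" using n assms(2) mult_nonneg_nonneg[of K "norm z"] by (simp add: field_simps add_nonneg_pos)
  finally show False by simp
qed

lemma haar:
  fixes A :: "int^2^2"
  assumes "det A \<noteq> 0" "continuous_on torus F"
  shows "Iint (\<lambda>x. F (phiA A x)) = Iint F"
proof -
  let ?C = "Henstock_Kurzweil_Integration.content BOX"
  have "norm (Iint (\<lambda>x. F (phiA A x)) - Iint F) \<le> e * (2 * ?C)" if e: "e > 0" for e
  proof -
    obtain g where g: "polynomial_function g" "\<forall>x\<in>torus. norm (F x - g x) < e"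
      using Stone_Weierstrass_polynomial_function[OF compact_torus assms(2) e] by blast
    obtain h where h: "trig h" "\<forall>x\<in>torus. g x = h x" using poly_TPt[OF g(1)] unfolding TPt_def by blast
    have ch: "continuous_on torus h" by (rule trig_cont[OF h(1)])
    have b1: "norm (Iint (\<lambda>x. F x - h x)) \<le> e * ?C"
      by (rule Iint_bound) (use assms(2) ch g(2) h(2) e in \<open>auto intro!: continuous_intros simp: less_imp_le\<close>)
    have b2: "norm (Iint (\<lambda>x. F (phiA A x) - h (phiA A x))) \<le> e * ?C"
      by (rule Iint_bound) (use phi_cont_comp[OF assms(2)] phi_cont_comp[OF ch] g(2) h(2) e phi_torus
          in \<open>auto intro!: continuous_intros simp: less_imp_le\<close>)
    have e1: "Iint (\<lambda>x. F x - h x) = Iint F - Iint h" by (rule Iint_diff[OF assms(2) ch])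
    have e2: "Iint (\<lambda>x. F (phiA A x) - h (phiA A x)) = Iint (\<lambda>x. F (phiA A x)) - Iint h"
      using Iint_diff[OF phi_cont_comp[OF assms(2)] phi_cont_comp[OF ch]] trig_haar[OF assms(1) h(1)] by simp
    have "Iint (\<lambda>x. F (phiA A x)) - Iint F = (Iint (\<lambda>x. F (phiA A x)) - Iint h) - (Iint F - Iint h)" by simp
    then have "norm (Iint (\<lambda>x. F (phiA A x)) - Iint F) \<le> norm (Iint (\<lambda>x. F (phiA A x)) - Iint h) + norm (Iint F - Iint h)"
      by (metis norm_triangle_ineq4)
    then show ?thesis using b1 b2 e1 e2 by simp
  qed
  then have "Iint (\<lambda>x. F (phiA A x)) - Iint F = 0"
    by (intro small_zero[where K = "2 * ?C"]) auto
  then show ?thesis by simp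
qed


lemma mnm_mult_aux:
  assumes "fst x \<noteq> 0" "snd x \<noteq> 0"
  shows "mnm j l x * mnm (-m) (-n) x = mnm (j-m) (l-n) x"
  using assms by (simp add: mnm_def power_int_diff power_int_minus field_simps)

lemma fourier_mnm:
  "fourier2 (restrict (mnm j l) torus) m n = (if j = m \<and> l = n then 1 else 0)"
proof -
  have "Iint (\<lambda>x. restrict (mnm j l) torus x * mnm (-m) (-n) x) = Iint (mnm (j-m) (l-n))"
    by (rule Iint_cong) (simp add: mnm_mult_aux torus_nz)
  then show ?thesis by (simp add: fourier2_Iint Iint_mnm)
qed

lemma fourier_pi:
  fixes A :: "int^2^2"
  assumes "det A \<noteq> 0" "continuous_on torus f"
  shows "fourier2 (piA A f) (A$1$1 * m + A$2$1 * n) (A$1$2 * m + A$2$2 * n) = fourier2 f m n"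
proof -
  let ?G = "\<lambda>y. f y * mnm (-m) (-n) y"
  have cG: "continuous_on torus ?G" using assms(2) mnm_cont by (intro continuous_intros) auto
  have "Iint (\<lambda>x. piA A f x * mnm (- (A$1$1 * m + A$2$1 * n)) (- (A$1$2 * m + A$2$2 * n)) x)
      = Iint (\<lambda>x. ?G (phiA A x))"
    by (rule Iint_cong) (simp add: piA_def mnm_phi torus_nz algebra_simps)
  also have "\<dots> = Iint ?G" by (rule haar[OF assms(1) cG])
  finally show ?thesis by (simp add: fourier2_Iint)
qed

lemma mnm_restrict_cont: "continuous_on torus (restrict (mnm j l) torus)"
  using mnm_cont by (rule continuous_on_cong[THEN iffD1, rotated 2]) auto

lemma mnm_in:
  assumes "real_of_int j + \<alpha> * real_of_int l \<ge> 0"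
  shows "restrict (mnm j l) torus \<in> A_alpha \<alpha>"
  unfolding A_alpha_def using assms mnm_restrict_cont by (auto simp: fourier_mnm)

lemma mnm_in_imp:
  assumes "restrict (mnm j l) torus \<in> A_alpha \<alpha>"
  shows "real_of_int j + \<alpha> * real_of_int l \<ge> 0"
proof (rule ccontr)
  assume "\<not> ?thesis"
  then have "real_of_int j + \<alpha> * real_of_int l < 0" by simp
  moreover have "\<forall>m n. real_of_int m + \<alpha> * real_of_int n < 0 \<longrightarrow> fourier2 (restrict (mnm j l) torus) m n = 0"
    using assms unfolding A_alpha_def by blast
  ultimately have "fourier2 (restrict (mnm j l) torus) j l = 0" by blast
  then show False by (simp add: fourier_mnm)
qed

lemma pi_mnm:
  "piA A (restrict (mnm j l) torus) = restrict (mnm (A$1$1 * j + A$2$1 * l) (A$1$2 * j + A$2$2 * l)) torus"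
  by (rule ext) (simp add: piA_def phi_torus mnm_phi torus_nz)

lemma dens:
  fixes \<beta> :: real
  assumes "\<beta> \<notin> \<rat>" "\<delta> > 0"
  obtains m n :: int where "n > 0" "0 < real_of_int m + real_of_int n * \<beta>" "real_of_int m + real_of_int n * \<beta> < \<delta>"
proof -
  obtain h k where "k > 0" "\<bar>of_int k * \<beta> - of_int h - \<delta>/2\<bar> < \<delta>/2"
    by (rule sequence_of_fractional_parts_is_dense[OF assms(1), where \<epsilon>="\<delta>/2" and \<alpha>="\<delta>/2"]) (use assms(2) in auto)
  then have "0 < of_int k * \<beta> - of_int h" "of_int k * \<beta> - of_int h < \<delta>"
    by arith+
  then show ?thesis using that[of k "-h"] \<open>k > 0\<close> by (auto simp: algebra_simps)
qed

lemma char_forward: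
  fixes A :: "int^2^2" and \<alpha> :: real
  assumes irr: "\<alpha> \<notin> \<rat>" and A: "A \<in> GL2Z"
    and maps: "\<And>f. f \<in> A_alpha \<alpha> \<Longrightarrow> piA A f \<in> A_alpha \<alpha>"
  shows "of_int (A$2$1) + \<alpha> * of_int (A$2$2) = \<alpha> * (of_int (A$1$1) + \<alpha> * of_int (A$1$2))
         \<and> of_int (A$1$1) + \<alpha> * of_int (A$1$2) > 0"
proof -
  define P where "P = of_int (A$1$1) + \<alpha> * of_int (A$1$2)"
  define Q where "Q = of_int (A$2$1) + \<alpha> * of_int (A$2$2)"
  have key: "P * m + Q * n \<ge> 0" if "real_of_int m + \<alpha> * real_of_int n \<ge> 0" for m n :: int
  proof -
    have "restrict (mnm (A$1$1 * m + A$2$1 * n) (A$1$2 * m + A$2$2 * n)) torus \<in> A_alpha \<alpha>"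
      using maps[OF mnm_in[OF that]] by (simp add: pi_mnm)
    from mnm_in_imp[OF this] show ?thesis by (simp add: P_def Q_def algebra_simps)
  qed
  have P0: "P \<ge> 0" using key[of 1 0] by simp
  define D where "D = Q - \<alpha> * P"
  have lin: "P * m + Q * n = P * (m + \<alpha> * n) + D * n" for m n :: real
    by (simp add: D_def algebra_simps)
  have "D = 0"
  proof (rule ccontr)
    assume "D \<noteq> 0"
    then consider "D > 0" | "D < 0" by linarith
    then show False
    proof cases
      case 1
      have ni: "-\<alpha> \<notin> \<rat>" using irr by (metis Rats_minus_iff)
      obtain m n :: int where mn: "n > 0" "0 < real_of_int m + real_of_int n * (-\<alpha>)"
        "real_of_int m + real_of_int n * (-\<alpha>) < D / (P+1)"
        by (rule dens[OF ni, of "D/(P+1)"]) (use 1 P0 in auto)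
      have "P * m + Q * (-n) \<ge> 0" using key[of m "-n"] mn by (simp add: algebra_simps)
      moreover have "P * (m + \<alpha> * (-n)) \<le> P * (D/(P+1))"
        using mn P0 by (intro mult_left_mono) (auto simp: algebra_simps)
      moreover have "P * (D/(P+1)) < D" using 1 P0 by (simp add: field_simps)
      moreover have "D * real_of_int (-n) \<le> - D" using mn 1 by simp
      ultimately show False using lin[of m "-n"] by simp
    next
      case 2
      obtain m n :: int where mn: "n > 0" "0 < real_of_int m + real_of_int n * \<alpha>"
        "real_of_int m + real_of_int n * \<alpha> < (-D) / (P+1)"
        by (rule dens[OF irr, of "-D/(P+1)"]) (use 2 P0 divide_neg_pos[of D "P+1"] in auto)
      have "P * m + Q * n \<ge> 0" using key[of m n] mn by (simp add: algebra_simps)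
      moreover have "P * (m + \<alpha> * n) \<le> P * (-D/(P+1))"
        using mn P0 by (intro mult_left_mono) (auto simp: algebra_simps)
      moreover have "P * (-D/(P+1)) < -D" using 2 P0 by (simp add: field_simps)
      moreover have "D * real_of_int n \<le> D"
      proof -
        have "1 \<le> real_of_int n" using mn(1) by simp
        then show ?thesis using 2 mult_left_mono_neg[of 1 "real_of_int n" D] by simp
      qed
      ultimately show False using lin[of m n] by simp
    qed
  qed
  have "P \<noteq> 0"
  proof
    assume "P = 0"
    then have Q0: "Q = 0" using \<open>D = 0\<close> by (simp add: D_def)
    have z: "a = 0 \<and> b = 0" if "of_int a + \<alpha> * of_int b = 0" for a b :: int
    proof -
      have "b = 0"
      proof (rule ccontr)
        assume "b \<noteq> 0"
        then have "\<alpha> = - of_int a / of_int b" using that by (simp add: field_simps)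
        then show False using irr by simp
      qed
      then show ?thesis using that by simp
    qed
    have "A$1$1 = 0 \<and> A$1$2 = 0" using z \<open>P = 0\<close> by (simp add: P_def)
    moreover have "A$2$1 = 0 \<and> A$2$2 = 0" using z Q0 by (simp add: Q_def)
    ultimately have "det A = 0" by (simp add: det_2)
    then show False using A by (simp add: GL2Z_def)
  qed
  then show ?thesis using P0 \<open>D = 0\<close> by (simp add: P_def Q_def D_def)
qed


definition cond :: "real \<Rightarrow> int^2^2 \<Rightarrow> bool" where
  "cond \<alpha> A \<longleftrightarrow> of_int (A$2$1) + \<alpha> * of_int (A$2$2) = \<alpha> * (of_int (A$1$1) + \<alpha> * of_int (A$1$2))
         \<and> of_int (A$1$1) + \<alpha> * of_int (A$1$2) > 0"

definition inv2 :: "int^2^2 \<Rightarrow> int^2^2" where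
  "inv2 A = (\<chi> i j. det A * (if i = 1 then (if j = 1 then A$2$2 else - A$1$2) else (if j = 1 then - A$2$1 else A$1$1)))"

lemma inv2_simps:
  "inv2 A $1$1 = det A * A$2$2" "inv2 A $1$2 = - det A * A$1$2"
  "inv2 A $2$1 = - det A * A$2$1" "inv2 A $2$2 = det A * A$1$1"
  by (simp_all add: inv2_def)

lemma GL2Z_det: "A \<in> GL2Z \<Longrightarrow> det A * det A = 1"
  by (auto simp: GL2Z_def abs_if split: if_splits)

lemma GL2Z_det': "A \<in> GL2Z \<Longrightarrow> det A * (A$1$1 * A$2$2 - A$1$2 * A$2$1) = 1"
  using GL2Z_det by (simp add: det_2)

lemma mat_eq_2: "(M :: 'a^2^2) = N \<longleftrightarrow> M$1$1 = N$1$1 \<and> M$1$2 = N$1$2 \<and> M$2$1 = N$2$1 \<and> M$2$2 = N$2$2"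
  by (auto simp: vec_eq_iff forall_2)

lemma mult_2_simps:
  "(M ** N) $1$1 = M$1$1 * N$1$1 + M$1$2 * N$2$1"
  "(M ** N) $1$2 = M$1$1 * N$1$2 + M$1$2 * N$2$2"
  "(M ** N) $2$1 = M$2$1 * N$1$1 + M$2$2 * N$2$1"
  "(M ** N) $2$2 = M$2$1 * N$1$2 + M$2$2 * N$2$2"
  for M N :: "'a::semiring_1^2^2"
  by (simp_all add: matrix_matrix_mult_def sum_2)

lemma mat1_simps: "(mat 1 :: 'a::zero_neq_one^2^2)$1$1 = 1" "(mat 1 :: 'a^2^2)$1$2 = 0"
  "(mat 1 :: 'a^2^2)$2$1 = 0" "(mat 1 :: 'a^2^2)$2$2 = 1"
  by (simp_all add: mat_def)

lemma inv2_right: "A \<in> GL2Z \<Longrightarrow> A ** inv2 A = mat 1"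
  using GL2Z_det'[of A]
  by (simp add: mat_eq_2 mult_2_simps inv2_simps mat1_simps algebra_simps)

lemma inv2_left: "A \<in> GL2Z \<Longrightarrow> inv2 A ** A = mat 1"
  using GL2Z_det'[of A]
  by (simp add: mat_eq_2 mult_2_simps inv2_simps mat1_simps algebra_simps)

lemma inv2_GL: "A \<in> GL2Z \<Longrightarrow> inv2 A \<in> GL2Z"
proof -
  assume A: "A \<in> GL2Z"
  have "det (inv2 A) = det A * det A * (A$1$1 * A$2$2 - A$1$2 * A$2$1)"
    by (simp add: det_2 inv2_simps algebra_simps)
  also have "\<dots> = det A" using GL2Z_det[OF A] by (simp add: det_2)
  finally show ?thesis using A by (simp add: GL2Z_def)
qed

lemma GL_det_nz: "A \<in> GL2Z \<Longrightarrow> det A \<noteq> 0"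
  by (auto simp: GL2Z_def)

lemma cond_inv2:
  assumes A: "A \<in> GL2Z" and c: "cond \<alpha> A"
  shows "cond \<alpha> (inv2 A)"
proof -
  define a b c' d where "a = real_of_int (A$1$1)" "b = real_of_int (A$1$2)" "c' = real_of_int (A$2$1)" "d = real_of_int (A$2$2)"
  define t where "t = real_of_int (det A)"
  have tt: "t * (a*d - b*c') = 1" using GL2Z_det'[OF A] unfolding a_b_c'_d_def t_def
    by (metis of_int_1 of_int_diff of_int_mult)
  have Q: "c' + \<alpha> * d = \<alpha> * (a + \<alpha> * b)" and P: "a + \<alpha> * b > 0"
    using c unfolding cond_def a_b_c'_d_def by auto
  have e1: "(t * d - \<alpha> * t * b) * (a + \<alpha> * b) = 1"
  proof -
    have "(t * d - \<alpha> * t * b) * (a + \<alpha> * b) = t * (a*d - b*c') + t * b * (c' + \<alpha> * d - \<alpha> * (a + \<alpha> * b))"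
      by (simp add: algebra_simps)
    then show ?thesis using tt Q by simp
  qed
  then have "t * d - \<alpha> * t * b = 1 / (a + \<alpha> * b)" using P by (simp add: field_simps)
  then have pos: "t * d - \<alpha> * t * b > 0" using P by simp
  have e2: "- t * c' + \<alpha> * (t * a) = \<alpha> * (t * d - \<alpha> * t * b)"
  proof -
    have "(- t * c' + \<alpha> * (t * a)) - \<alpha> * (t * d - \<alpha> * t * b) = t * (\<alpha> * (a + \<alpha> * b) - (c' + \<alpha> * d))"
      by (simp add: algebra_simps)
    then show ?thesis using Q by simp
  qed
  show ?thesis unfolding cond_def using pos e2
    by (simp add: inv2_simps a_b_c'_d_def t_def algebra_simps)
qed

lemma phi_inv:
  assumes A: "A \<in> GL2Z" and x: "x \<in> torus"
  shows "phiA A (phiA (inv2 A) x) = x" "phiA (inv2 A) (phiA A x) = x"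
  using x torus_nz[OF x] by (simp_all add: phi_comp inv2_right[OF A] inv2_left[OF A] phi_id)

lemma maps_into:
  assumes A: "A \<in> GL2Z" and c: "cond \<alpha> A" and f: "f \<in> A_alpha \<alpha>"
  shows "piA A f \<in> A_alpha \<alpha>"
proof -
  have fc: "continuous_on torus f" and fe: "f \<in> extensional torus"
    and ff: "\<And>m n. real_of_int m + \<alpha> * real_of_int n < 0 \<Longrightarrow> fourier2 f m n = 0"
    using f by (auto simp: A_alpha_def)
  have "continuous_on torus (piA A f)"
    unfolding piA_def using phi_cont_comp[OF fc, of A]
    by (rule continuous_on_cong[THEN iffD1, rotated 2]) auto
  moreover have "piA A f \<in> extensional torus" by (simp add: piA_def)
  moreover have "fourier2 (piA A f) j l = 0" if jl: "real_of_int j + \<alpha> * real_of_int l < 0" for j l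
  proof -
    define B where "B = inv2 A"
    define m where "m = B$1$1 * j + B$2$1 * l"
    define n where "n = B$1$2 * j + B$2$2 * l"
    have BA: "B ** A = mat 1" using inv2_left[OF A] by (simp add: B_def)
    then have "B$1$1 * A$1$1 + B$1$2 * A$2$1 = 1" "B$2$1 * A$1$1 + B$2$2 * A$2$1 = 0"
       "B$1$1 * A$1$2 + B$1$2 * A$2$2 = 0" "B$2$1 * A$1$2 + B$2$2 * A$2$2 = 1"
      by (simp_all add: mat_eq_2 mult_2_simps mat1_simps)
    note eqs = this
    have "A$1$1 * m + A$2$1 * n = (B$1$1 * A$1$1 + B$1$2 * A$2$1) * j + (B$2$1 * A$1$1 + B$2$2 * A$2$1) * l"
      unfolding m_def n_def by (simp add: algebra_simps)
    then have jm: "A$1$1 * m + A$2$1 * n = j" using eqs by simp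
    have "A$1$2 * m + A$2$2 * n = (B$1$1 * A$1$2 + B$1$2 * A$2$2) * j + (B$2$1 * A$1$2 + B$2$2 * A$2$2) * l"
      unfolding m_def n_def by (simp add: algebra_simps)
    then have ln: "A$1$2 * m + A$2$2 * n = l" using eqs by simp
    have "fourier2 (piA A f) j l = fourier2 f m n"
      using fourier_pi[OF GL_det_nz[OF A] fc, of m n] by (simp add: jm ln)
    moreover have "real_of_int m + \<alpha> * real_of_int n < 0"
    proof -
      define P where "P = of_int (A$1$1) + \<alpha> * of_int (A$1$2)"
      have Q: "of_int (A$2$1) + \<alpha> * of_int (A$2$2) = \<alpha> * P" and P: "P > 0"
        using c unfolding cond_def P_def by auto
      have "real_of_int j + \<alpha> * real_of_int l =
          P * m + (of_int (A$2$1) + \<alpha> * of_int (A$2$2)) * n"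
        unfolding jm[symmetric] ln[symmetric] P_def by (simp add: algebra_simps)
      also have "\<dots> = P * (m + \<alpha> * n)" by (simp add: Q algebra_simps)
      finally show ?thesis using jl P by (simp add: mult_less_0_iff)
    qed
    ultimately show ?thesis using ff by simp
  qed
  ultimately show ?thesis by (simp add: A_alpha_def)
qed

lemma char_backward:
  assumes A: "A \<in> GL2Z" and c: "cond \<alpha> A"
  shows "isometric_automorphism \<alpha> A"
proof -
  let ?B = "inv2 A"
  have B: "?B \<in> GL2Z" and cB: "cond \<alpha> ?B" using inv2_GL[OF A] cond_inv2[OF A c] by auto
  have left: "piA ?B (piA A f) = f" if "f \<in> A_alpha \<alpha>" for f
  proof
    fix x
    have fe: "f \<in> extensional torus" using that by (simp add: A_alpha_def)
    show "piA ?B (piA A f) x = f x"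
      using phi_inv[OF A] phi_torus extensional_arb[OF fe] by (cases "x \<in> torus") (auto simp: piA_def)
  qed
  have right: "piA A (piA ?B f) = f" if "f \<in> A_alpha \<alpha>" for f
  proof
    fix x
    have fe: "f \<in> extensional torus" using that by (simp add: A_alpha_def)
    show "piA A (piA ?B f) x = f x"
      using phi_inv[OF A] phi_torus extensional_arb[OF fe] by (cases "x \<in> torus") (auto simp: piA_def)
  qed
  have bij: "bij_betw (piA A) (A_alpha \<alpha>) (A_alpha \<alpha>)"
    by (rule bij_betw_byWitness[where f'="piA ?B"]) (use left right maps_into[OF A c] maps_into[OF B cB] in auto)
  have img: "phiA A ` torus = torus"
  proof
    show "phiA A ` torus \<subseteq> torus" using phi_torus by auto
    show "torus \<subseteq> phiA A ` torus"
    proof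
      fix y assume y: "y \<in> torus"
      then have "y = phiA A (phiA ?B y)" using phi_inv[OF A y] by simp
      then show "y \<in> phiA A ` torus" using phi_torus[OF y] by blast
    qed
  qed
  have "sup_norm (piA A f) = sup_norm f" for f
  proof -
    have "(\<lambda>x. cmod (piA A f x)) ` torus = (\<lambda>y. cmod (f y)) ` (phiA A ` torus)"
      by (auto simp: piA_def image_image)
    then show ?thesis unfolding sup_norm_def using img by simp
  qed
  then show ?thesis using bij by (simp add: isometric_automorphism_def)
qed

lemma char:
  assumes irr: "\<alpha> \<notin> \<rat>" and A: "A \<in> GL2Z"
  shows "isometric_automorphism \<alpha> A \<longleftrightarrow> cond \<alpha> A"
proof
  assume "isometric_automorphism \<alpha> A"
  then have "\<And>f. f \<in> A_alpha \<alpha> \<Longrightarrow> piA A f \<in> A_alpha \<alpha>"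
    by (auto simp: isometric_automorphism_def bij_betw_def)
  then show "cond \<alpha> A" using char_forward[OF irr A] by (simp add: cond_def)
next
  assume "cond \<alpha> A" then show "isometric_automorphism \<alpha> A" by (rule char_backward[OF A])
qed


lemma irr_lin:
  assumes "\<alpha> \<notin> \<rat>" "real_of_int x * \<alpha> + real_of_int y = 0"
  shows "x = 0 \<and> y = 0"
proof -
  have "x = 0"
  proof (rule ccontr)
    assume "x \<noteq> 0"
    then have "\<alpha> = - real_of_int y / real_of_int x" using assms(2) by (simp add: field_simps)
    then show False using assms(1) by simp
  qed
  then show ?thesis using assms(2) by simp
qed

definition lam :: "real \<Rightarrow> int^2^2 \<Rightarrow> real" where
  "lam \<alpha> A = real_of_int (A$1$1) + \<alpha> * real_of_int (A$1$2)"

locale pset =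
  fixes r k :: int and p q s :: nat and \<alpha> :: real
  assumes alpha_def: "\<alpha> = real_of_int r / real s + real_of_int k * sqrt (real p / real q)"
    and alpha_irr: "\<alpha> \<notin> \<rat>"
    and k: "k \<in> {-1, 1}" and s_pos: "s > 0" and q_pos: "q > 0" and s_even: "even s"
    and cop_rs: "gcd r (int s) = 1"
begin

definition "D1 = d1f p q r s"
definition "X0 = int p * int s ^ 2 - int q * r ^ 2"
definition "dd = real_of_int D1"
definition "\<kappa> = sqrt (real p / real q)"
definition "NN = real p * real q * real s ^ 4 / dd ^ 2"
definition "\<rho> = real q * real s ^ 2 * \<kappa> / dd"

lemma k2: "real_of_int k * real_of_int k = 1" using k by auto

lemma p_pos: "p > 0"
proof (rule ccontr)
  assume "\<not> p > 0"
  then have "\<alpha> = real_of_int r / real s" using alpha_def by simp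
  then show False using alpha_irr by (metis Rats_divide Rats_of_int Rats_of_nat)
qed

lemma D1_pos: "D1 > 0"
proof -
  have "2 * int q * int s \<noteq> 0" using q_pos s_pos by simp
  then show ?thesis unfolding D1_def d1f_def by simp
qed

lemma D1_dvd1: "D1 dvd 2 * int q * int s" unfolding D1_def d1f_def by simp
lemma D1_dvd2: "D1 dvd X0" unfolding D1_def d1f_def X0_def by simp

lemma D1_dvd3: "D1 dvd int q * int s ^ 2"
proof -
  obtain s' where "s = 2 * s'" using s_even by blast
  then have h: "int s = 2 * int s'" by simp
  have "int q * int s ^ 2 = int q * int s * int s" by (simp add: power2_eq_square)
  also have "\<dots> = int q * int s * (2 * int s')" using h by simp
  also have "\<dots> = (2 * int q * int s) * int s'" by (simp add: algebra_simps)
  finally have "int q * int s ^ 2 = (2 * int q * int s) * int s'" .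
  then show ?thesis using D1_dvd1 by (metis dvd_mult2)
qed

lemma dd_pos: "dd > 0" using D1_pos by (simp add: dd_def)

lemma kappa_pos: "\<kappa> > 0" using p_pos q_pos by (simp add: \<kappa>_def)

lemma kappa_sq: "\<kappa> * \<kappa> = real p / real q"
  unfolding \<kappa>_def by simp

lemma rho_pos: "\<rho> > 0" using q_pos s_pos kappa_pos dd_pos by (simp add: \<rho>_def)

lemma rho_sq: "\<rho> * \<rho> = NN"
proof -
  have "\<rho> * \<rho> = (real q * real s ^ 2 / dd)^2 * (\<kappa> * \<kappa>)" by (simp add: \<rho>_def power2_eq_square)
  also have "\<dots> = NN" using q_pos by (simp add: kappa_sq NN_def power2_eq_square power4_eq_xxxx field_simps)
  finally show ?thesis .
qed

lemma NN_pos: "NN > 0" using rho_sq rho_pos by (metis zero_less_mult_iff)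

lemma sqrt_NN: "sqrt NN = \<rho>"
  by (rule real_sqrt_unique) (use rho_sq rho_pos in \<open>auto simp: power2_eq_square\<close>)

lemma minpoly: "real q * real s ^ 2 * \<alpha>^2 - 2 * real q * real_of_int r * real s * \<alpha>
   + real q * real_of_int r ^ 2 - real p * real s ^ 2 = 0"
proof -
  have "\<alpha> - real_of_int r / real s = real_of_int k * \<kappa>" by (simp add: alpha_def \<kappa>_def)
  moreover have "(real_of_int k * \<kappa>)^2 = real p / real q"
    using k2 kappa_sq by (simp add: power2_eq_square algebra_simps)
  ultimately have "(\<alpha> - real_of_int r / real s)^2 = real p / real q" by simp
  then show ?thesis using s_pos q_pos by (simp add: field_simps power2_eq_square)
qed

lemma cond_struct:
  fixes B :: "int^2^2"
  assumes c: "cond \<alpha> B"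
  shows "int s * (B$1$1 - B$2$2) = - 2 * r * B$1$2" and "B$1$2 * X0 = B$2$1 * int q * int s ^ 2"
proof -
  define a b c' d where "a = B$1$1" "b = B$1$2" "c' = B$2$1" "d = B$2$2"
  have Q: "real_of_int c' + \<alpha> * real_of_int d = \<alpha> * (real_of_int a + \<alpha> * real_of_int b)"
    using c unfolding cond_def a_b_c'_d_def by auto
  have "real_of_int (2 * int q * r * int s * b + (a - d) * int q * int s ^ 2) * \<alpha> + real_of_int (b * X0 - c' * int q * int s ^ 2) =
      - real_of_int b * (real q * real s ^ 2 * \<alpha>^2 - 2 * real q * real_of_int r * real s * \<alpha>
   + real q * real_of_int r ^ 2 - real p * real s ^ 2) + real q * real s ^ 2 * (\<alpha> * (real_of_int a + \<alpha> * real_of_int b) - (real_of_int c' + \<alpha> * real_of_int d))"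
    by (simp add: X0_def algebra_simps power2_eq_square)
  also have "\<dots> = 0" using minpoly Q by simp
  finally have "2 * int q * r * int s * b + (a - d) * int q * int s ^ 2 = 0 \<and> b * X0 - c' * int q * int s ^ 2 = 0"
    by (rule irr_lin[OF alpha_irr])
  then have h1: "int q * int s * (2 * r * b + int s * (a - d)) = 0" and h2: "b * X0 = c' * int q * int s ^ 2"
    by (auto simp: algebra_simps power2_eq_square)
  from h1 have "2 * r * b + int s * (a - d) = 0" using q_pos s_pos by simp
  then show "int s * (B$1$1 - B$2$2) = - 2 * r * B$1$2" unfolding a_b_c'_d_def by simp
  show "B$1$2 * X0 = B$2$1 * int q * int s ^ 2" using h2 unfolding a_b_c'_d_def .
qed

end


lemma cond_lam: "cond \<alpha> A \<longleftrightarrow>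
   real_of_int (A$2$1) + \<alpha> * real_of_int (A$2$2) = \<alpha> * lam \<alpha> A \<and> lam \<alpha> A > 0"
  by (simp add: cond_def lam_def)

lemma cond_mult:
  assumes "cond \<alpha> A" "cond \<alpha> B"
  shows "cond \<alpha> (A ** B) \<and> lam \<alpha> (A ** B) = lam \<alpha> A * lam \<alpha> B"
proof -
  have QA: "real_of_int (A$2$1) + \<alpha> * real_of_int (A$2$2) = \<alpha> * lam \<alpha> A" and PA: "lam \<alpha> A > 0"
    and QB: "real_of_int (B$2$1) + \<alpha> * real_of_int (B$2$2) = \<alpha> * lam \<alpha> B" and PB: "lam \<alpha> B > 0"
    using assms by (auto simp: cond_lam)
  have l1: "lam \<alpha> (A ** B) = real_of_int (A$1$1) * lam \<alpha> B + real_of_int (A$1$2) * (real_of_int (B$2$1) + \<alpha> * real_of_int (B$2$2))"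
    by (simp add: lam_def mult_2_simps algebra_simps)
  have l2: "real_of_int ((A**B)$2$1) + \<alpha> * real_of_int ((A**B)$2$2) = real_of_int (A$2$1) * lam \<alpha> B + real_of_int (A$2$2) * (real_of_int (B$2$1) + \<alpha> * real_of_int (B$2$2))"
    by (simp add: lam_def mult_2_simps algebra_simps)
  have e1: "lam \<alpha> (A ** B) = lam \<alpha> A * lam \<alpha> B"
    unfolding l1 QB by (simp add: lam_def algebra_simps)
  have e2: "real_of_int ((A**B)$2$1) + \<alpha> * real_of_int ((A**B)$2$2) = \<alpha> * lam \<alpha> (A ** B)"
    unfolding l2 QB e1
  proof -
    have "real_of_int (A$2$1) * lam \<alpha> B + real_of_int (A$2$2) * (\<alpha> * lam \<alpha> B) = (real_of_int (A$2$1) + \<alpha> * real_of_int (A$2$2)) * lam \<alpha> B"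
      by (simp add: algebra_simps)
    then show "real_of_int (A$2$1) * lam \<alpha> B + real_of_int (A$2$2) * (\<alpha> * lam \<alpha> B) = \<alpha> * (lam \<alpha> A * lam \<alpha> B)"
      using QA by simp
  qed
  show ?thesis using e1 e2 PA PB by (simp add: cond_lam)
qed

lemma GL_mult: "A \<in> GL2Z \<Longrightarrow> B \<in> GL2Z \<Longrightarrow> A ** B \<in> GL2Z"
  by (simp add: GL2Z_def det_mul abs_mult)

lemma GL_one: "mat 1 \<in> GL2Z" by (simp add: GL2Z_def)

lemma cond_one: "cond \<alpha> (mat 1)" "lam \<alpha> (mat 1) = 1"
  by (simp_all add: cond_def lam_def mat1_simps)

lemma lam_inv2:
  assumes A: "A \<in> GL2Z" and c: "cond \<alpha> A"
  shows "lam \<alpha> (inv2 A) = 1 / lam \<alpha> A"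
proof -
  have "A ** inv2 A = mat 1" by (rule inv2_right[OF A])
  then have "lam \<alpha> A * lam \<alpha> (inv2 A) = 1"
    using cond_mult[OF c cond_inv2[OF A c]] cond_one by simp
  then show ?thesis using c by (simp add: cond_lam field_simps)
qed

lemma lam_inj:
  assumes irr: "\<alpha> \<notin> \<rat>" and "cond \<alpha> A" "cond \<alpha> B" "lam \<alpha> A = lam \<alpha> B"
  shows "A = B"
proof -
  have "real_of_int (A$1$2 - B$1$2) * \<alpha> + real_of_int (A$1$1 - B$1$1) = 0"
    using assms(4) by (simp add: lam_def algebra_simps)
  from irr_lin[OF irr this] have 1: "A$1$1 = B$1$1" "A$1$2 = B$1$2" by auto
  have "real_of_int (A$2$1) + \<alpha> * real_of_int (A$2$2) = real_of_int (B$2$1) + \<alpha> * real_of_int (B$2$2)"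
    using assms(2,3,4) by (simp add: cond_lam)
  then have "real_of_int (A$2$2 - B$2$2) * \<alpha> + real_of_int (A$2$1 - B$2$1) = 0"
    by (simp add: algebra_simps)
  from irr_lin[OF irr this] have 2: "A$2$1 = B$2$1" "A$2$2 = B$2$2" by auto
  show ?thesis using 1 2 by (simp add: mat_eq_2)
qed

lemma mat_pow_props:
  assumes "S \<in> GL2Z" "cond \<alpha> S"
  shows "mat_pow S n \<in> GL2Z \<and> cond \<alpha> (mat_pow S n) \<and> lam \<alpha> (mat_pow S n) = lam \<alpha> S ^ n"
proof (induction n)
  case 0 then show ?case by (simp add: GL_one cond_one)
next
  case (Suc n)
  then show ?case using cond_mult[OF assms(2), of "mat_pow S n"] GL_mult[OF assms(1)] by simp
qed

lemma mat_pow_Suc': "mat_pow S n ** S = mat_pow S (Suc n)"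
  by (induction n) (simp_all add: matrix_mul_assoc[symmetric])

lemma descent_ge1:
  assumes irr: "\<alpha> \<notin> \<rat>" and S: "S \<in> GL2Z" "cond \<alpha> S" and eps: "lam \<alpha> S > 1"
    and minimal: "\<And>B. B \<in> GL2Z \<Longrightarrow> cond \<alpha> B \<Longrightarrow> lam \<alpha> B > 1 \<Longrightarrow> lam \<alpha> B \<ge> lam \<alpha> S"
  shows "A \<in> GL2Z \<Longrightarrow> cond \<alpha> A \<Longrightarrow> 1 \<le> lam \<alpha> A \<Longrightarrow> lam \<alpha> A < lam \<alpha> S ^ Suc n \<Longrightarrow> \<exists>m. A = mat_pow S m"
proof (induction n arbitrary: A)
  case 0
  then have "lam \<alpha> A = 1" using minimal[of A] by fastforce
  then have "A = mat 1" using lam_inj[OF irr 0(2) cond_one(1)] cond_one(2) by simp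
  then show ?case by (metis mat_pow.simps(1))
next
  case (Suc n)
  show ?case
  proof (cases "lam \<alpha> A < lam \<alpha> S")
    case True
    then have "lam \<alpha> A = 1" using minimal[of A] Suc.prems by fastforce
    then have "A = mat 1" using lam_inj[OF irr Suc.prems(2) cond_one(1)] cond_one(2) by simp
    then show ?thesis by (metis mat_pow.simps(1))
  next
    case False
    let ?A' = "A ** inv2 S"
    have G': "?A' \<in> GL2Z" using GL_mult[OF Suc.prems(1) inv2_GL[OF S(1)]] .
    have c': "cond \<alpha> ?A'" and l': "lam \<alpha> ?A' = lam \<alpha> A / lam \<alpha> S"
      using cond_mult[OF Suc.prems(2) cond_inv2[OF S]] lam_inv2[OF S] by auto
    have "1 \<le> lam \<alpha> ?A'" using False eps l' by simp
    moreover have "lam \<alpha> ?A' < lam \<alpha> S ^ Suc n"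
    proof -
      have "lam \<alpha> A / lam \<alpha> S < lam \<alpha> S ^ Suc (Suc n) / lam \<alpha> S"
        by (rule divide_strict_right_mono) (use Suc.prems(4) eps in auto)
      then show ?thesis using l' eps by simp
    qed
    ultimately obtain m where m: "?A' = mat_pow S m" using Suc.IH[OF G' c'] by blast
    have "A = ?A' ** S"
      by (simp add: matrix_mul_assoc[symmetric] inv2_left[OF S(1)])
    also have "\<dots> = mat_pow S (Suc m)" by (simp add: m mat_pow_Suc')
    finally show ?thesis by blast
  qed
qed

lemma descent:
  assumes irr: "\<alpha> \<notin> \<rat>" and S: "S \<in> GL2Z" "cond \<alpha> S" and eps: "lam \<alpha> S > 1"
    and minimal: "\<And>B. B \<in> GL2Z \<Longrightarrow> cond \<alpha> B \<Longrightarrow> lam \<alpha> B > 1 \<Longrightarrow> lam \<alpha> B \<ge> lam \<alpha> S"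
    and A: "A \<in> GL2Z" "cond \<alpha> A"
  shows "\<exists>m. A = mat_pow S m \<or> A ** mat_pow S m = mat 1"
proof (cases "lam \<alpha> A \<ge> 1")
  case True
  obtain n where "lam \<alpha> A < lam \<alpha> S ^ n" using real_arch_pow[OF eps] by blast
  moreover have "lam \<alpha> S ^ n \<le> lam \<alpha> S ^ Suc n" by (rule power_increasing) (use eps in auto)
  ultimately have "lam \<alpha> A < lam \<alpha> S ^ Suc n" by linarith
  then show ?thesis using descent_ge1[OF irr S eps minimal A True] by blast
next
  case False
  have A': "inv2 A \<in> GL2Z" "cond \<alpha> (inv2 A)" using inv2_GL[OF A(1)] cond_inv2[OF A] by auto
  have pos: "lam \<alpha> A > 0" using A(2) by (simp add: cond_lam)
  have "lam \<alpha> (inv2 A) \<ge> 1" using lam_inv2[OF A] False pos by simp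
  obtain n where "lam \<alpha> (inv2 A) < lam \<alpha> S ^ n" using real_arch_pow[OF eps] by blast
  moreover have "lam \<alpha> S ^ n \<le> lam \<alpha> S ^ Suc n" by (rule power_increasing) (use eps in auto)
  ultimately have "lam \<alpha> (inv2 A) < lam \<alpha> S ^ Suc n" by linarith
  then obtain m where "inv2 A = mat_pow S m" using descent_ge1[OF irr S eps minimal A'] \<open>lam \<alpha> (inv2 A) \<ge> 1\<close> by blast
  then have "A ** mat_pow S m = mat 1" using inv2_right[OF A(1)] by simp
  then show ?thesis by blast
qed


lemma halves_int:
  fixes a d :: real
  assumes "a + d \<in> \<int>" "a - d \<in> \<int>" "a * d \<in> \<int>"
  shows "a \<in> \<int> \<and> d \<in> \<int>"
proof -
  obtain m n :: int where m: "a + d = of_int m" and n: "a - d = of_int n"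
    using assms(1,2) by (metis Ints_cases)
  obtain t :: int where t: "a * d = of_int t" using assms(3) by (metis Ints_cases)
  have "4 * (a * d) = (a + d)^2 - (a - d)^2" by (simp add: power2_eq_square algebra_simps)
  then have "real_of_int (4 * t) = real_of_int ((m + n) * (m - n))" using m n t by (simp add: power2_eq_square algebra_simps)
  then have e: "4 * t = (m + n) * (m - n)" by (simp only: of_int_eq_iff)
  have "even (m + n)"
  proof (rule ccontr)
    assume o: "odd (m + n)"
    have "m - n = (m + n) - 2 * n" by simp
    then have "odd (m - n)" using o by (metis even_diff even_mult_iff even_numeral)
    then have "odd ((m + n) * (m - n))" using o by simp
    then show False using e by (metis even_mult_iff even_numeral)
  qed
  then obtain w where w: "m + n = 2 * w" by blast
  have "a = of_int w" using m n w by (simp add: algebra_simps)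
  moreover have "d = of_int (m - w)" using m \<open>a = of_int w\<close> by simp
  ultimately show ?thesis by simp
qed

lemma real_mat_mult: "real_mat (A ** B) = real_mat A ** real_mat B"
  by (simp add: real_mat_def matrix_matrix_mult_def vec_eq_iff)

lemma real_mat_one: "real_mat (mat 1) = mat 1"
  by (simp add: real_mat_def mat_def vec_eq_iff)

lemma real_mat_inj: "real_mat A = real_mat B \<longleftrightarrow> A = B"
  by (simp add: real_mat_def vec_eq_iff)

lemma real_mat_pow: "mat_pow (real_mat T) n = real_mat (mat_pow T n)"
  by (induction n) (simp_all add: real_mat_one real_mat_mult)

lemma is_int_power_real:
  "is_int_power (real_mat A) (real_mat T) \<longleftrightarrow> (\<exists>n. A = mat_pow T n \<or> A ** mat_pow T n = mat 1)"
  unfolding is_int_power_def real_mat_pow real_mat_mult[symmetric] real_mat_one[symmetric] real_mat_inj ..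

lemma Tmat_simps:
  "Tmat p q r s d u v $1$1 = - (q * r * s / d) * u + v"
  "Tmat p q r s d u v $1$2 = (q * s ^ 2 / d) * u"
  "Tmat p q r s d u v $2$1 = ((p * s ^ 2 - q * r ^ 2) / d) * u"
  "Tmat p q r s d u v $2$2 = (q * r * s / d) * u + v"
  by (simp_all add: Tmat_def)

definition int_of_mat :: "real^2^2 \<Rightarrow> int^2^2" where
  "int_of_mat T = (\<chi> i j. \<lfloor>T$i$j\<rfloor>)"

lemma real_mat_int_of_mat:
  assumes "\<And>i j. T$i$j \<in> \<int>"
  shows "real_mat (int_of_mat T) = T"
  using assms by (simp add: real_mat_def int_of_mat_def vec_eq_iff)

context pset
begin

abbreviation "Tm \<equiv> Tmat (real p) (real q) (real_of_int r) (real s) dd"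
abbreviation "K \<equiv> real_of_int k"

lemma Tm_det: "det (Tm u v) = v^2 - NN * u^2"
  using dd_pos q_pos s_pos
  by (simp add: det_2 Tmat_simps NN_def power2_eq_square power4_eq_xxxx field_simps)

lemma Tm_lam: "Tm u v $1$1 + \<alpha> * Tm u v $1$2 = v + K * u * \<rho>"
  using dd_pos q_pos s_pos
  by (simp add: Tmat_simps alpha_def \<rho>_def \<kappa>_def power2_eq_square field_simps)

lemma Tm_eig: "Tm u v $2$1 + \<alpha> * Tm u v $2$2 = \<alpha> * (Tm u v $1$1 + \<alpha> * Tm u v $1$2)"
proof -
  have "Tm u v $2$1 + \<alpha> * Tm u v $2$2 - \<alpha> * (Tm u v $1$1 + \<alpha> * Tm u v $1$2)
     = - (u / dd) * (real q * real s ^ 2 * \<alpha>^2 - 2 * real q * real_of_int r * real s * \<alpha>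
   + real q * real_of_int r ^ 2 - real p * real s ^ 2)"
    using dd_pos by (simp add: Tmat_simps power2_eq_square field_simps)
  then show ?thesis using minpoly by simp
qed

lemma Tm_int:
  assumes u: "u \<in> \<int>" and v: "2 * v \<in> \<int>" and dt: "v^2 - NN * u^2 \<in> \<int>"
  shows "Tm u v $i$j \<in> \<int>"
proof -
  obtain U where U: "u = of_int U" using u by (metis Ints_cases)
  obtain c1 where c1: "int q * int s ^ 2 = D1 * c1" using D1_dvd3 by blast
  obtain c2 where c2: "X0 = D1 * c2" using D1_dvd2 by blast
  obtain c3 where c3: "2 * int q * int s = D1 * c3" using D1_dvd1 by blast
  have b: "Tm u v $1$2 = of_int (c1 * U)"
  proof -
    have "real q * real s ^ 2 = dd * of_int c1" using arg_cong[OF c1, of real_of_int] by (simp add: dd_def)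
    then show ?thesis using dd_pos by (simp add: Tmat_simps U)
  qed
  have c: "Tm u v $2$1 = of_int (c2 * U)"
  proof -
    have "real p * real s ^ 2 - real q * real_of_int r ^ 2 = dd * of_int c2"
      using arg_cong[OF c2, of real_of_int] by (simp add: dd_def X0_def)
    then show ?thesis using dd_pos by (simp add: Tmat_simps U)
  qed
  have amd: "Tm u v $1$1 - Tm u v $2$2 = of_int (- r * c3 * U)"
  proof -
    have "2 * real q * real s = dd * of_int c3" using arg_cong[OF c3, of real_of_int] by (simp add: dd_def)
    then have "2 * (real q * real_of_int r * real s / dd) = real_of_int r * of_int c3" using dd_pos
      by (simp add: field_simps)
    moreover have "Tm u v $1$1 - Tm u v $2$2 = - (2 * (real q * real_of_int r * real s / dd)) * u"
      by (simp add: Tmat_simps algebra_simps)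
    ultimately show ?thesis by (simp add: U)
  qed
  have apd: "Tm u v $1$1 + Tm u v $2$2 = 2 * v" by (simp add: Tmat_simps)
  have "Tm u v $1$1 * Tm u v $2$2 = det (Tm u v) + Tm u v $1$2 * Tm u v $2$1" by (simp add: det_2)
  also have "\<dots> \<in> \<int>" using Tm_det dt b c by simp
  finally have "Tm u v $1$1 \<in> \<int> \<and> Tm u v $2$2 \<in> \<int>"
    using halves_int[of "Tm u v $1$1" "Tm u v $2$2"] apd amd v by simp
  then show ?thesis using b c exhaust_2[of i] exhaust_2[of j] by auto
qed

end


lemma fund_le:
  assumes Mh: "Mh > 0" and f: "fundamental_solution Mh e x1 y1"
    and XY: "X > 0" "Y > 0" "real_of_int X ^ 2 - Mh * real_of_int Y ^ 2 = of_int e"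
  shows "real_of_int x1 + real_of_int y1 * sqrt Mh \<le> real_of_int X + real_of_int Y * sqrt Mh"
proof -
  have all: "\<forall>x' y'. x' > 0 \<and> y' > 0 \<and> real_of_int x' ^ 2 - Mh * real_of_int y' ^ 2 = of_int e \<longrightarrow> x1 \<le> x'"
    and e1: "real_of_int x1 ^ 2 - Mh * real_of_int y1 ^ 2 = of_int e" and pos: "x1 > 0" "y1 > 0"
    using f unfolding fundamental_solution_def by blast+
  have x1: "x1 \<le> X" using all XY by blast
  have rx: "real_of_int x1 \<le> real_of_int X" using x1 by simp
  have "real_of_int x1 ^ 2 \<le> real_of_int X ^ 2" by (rule power_mono[OF rx]) (use pos in simp)
  then have "Mh * real_of_int y1 ^ 2 \<le> Mh * real_of_int Y ^ 2" using e1 XY(3) by linarith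
  then have "real_of_int y1 ^ 2 \<le> real_of_int Y ^ 2" using Mh by simp
  then have ry: "real_of_int y1 \<le> real_of_int Y" by (rule power2_le_imp_le) (use XY(2) in simp)
  have "real_of_int y1 * sqrt Mh \<le> real_of_int Y * sqrt Mh" by (rule mult_right_mono[OF ry]) (use Mh in simp)
  then show ?thesis using rx by linarith
qed

context pset
begin

definition "vB B = (real_of_int (B$1$1) + real_of_int (B$2$2)) / 2"
definition "uB B = real_of_int (B$1$2) * dd / (real q * real s ^ 2)"

lemma B_facts:
  assumes c: "cond \<alpha> B"
  shows "lam \<alpha> B = vB B + K * uB B * \<rho>" and "real_of_int (det B) = vB B ^ 2 - NN * uB B ^ 2"
proof -
  have s1: "real s * (real_of_int (B$1$1) - real_of_int (B$2$2)) = - 2 * real_of_int r * real_of_int (B$1$2)"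
    using arg_cong[OF cond_struct(1)[OF c], of real_of_int] by simp
  have s2: "real_of_int (B$1$2) * (real p * real s ^ 2 - real q * real_of_int r ^ 2) = real_of_int (B$2$1) * real q * real s ^ 2"
    using arg_cong[OF cond_struct(2)[OF c], of real_of_int] by (simp add: X0_def)
  have a: "real_of_int (B$1$1) = vB B - real_of_int r * real_of_int (B$1$2) / real s"
    using s1 s_pos by (simp add: vB_def field_simps)
  have d: "real_of_int (B$2$2) = vB B + real_of_int r * real_of_int (B$1$2) / real s"
    using s1 s_pos by (simp add: vB_def field_simps)
  have c': "real_of_int (B$2$1) = real_of_int (B$1$2) * (real p / real q - real_of_int r ^ 2 / real s ^ 2)"
    using s2 s_pos q_pos by (simp add: field_simps)
  have ur: "uB B * \<rho> = real_of_int (B$1$2) * \<kappa>"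
    using dd_pos q_pos s_pos by (simp add: uB_def \<rho>_def field_simps)
  have nu: "NN * uB B ^ 2 = real_of_int (B$1$2) ^ 2 * (real p / real q)"
    using dd_pos q_pos s_pos by (simp add: uB_def NN_def power2_eq_square power4_eq_xxxx field_simps)
  have "lam \<alpha> B = vB B - real_of_int r * real_of_int (B$1$2) / real s + (real_of_int r / real s + K * \<kappa>) * real_of_int (B$1$2)"
    unfolding lam_def a by (simp add: alpha_def \<kappa>_def)
  also have "\<dots> = vB B + K * (real_of_int (B$1$2) * \<kappa>)" by (simp add: algebra_simps)
  finally show "lam \<alpha> B = vB B + K * uB B * \<rho>" using ur by (simp add: mult.assoc)
  have "real_of_int (det B) = real_of_int (B$1$1) * real_of_int (B$2$2) - real_of_int (B$1$2) * real_of_int (B$2$1)"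
    by (simp add: det_2)
  also have "\<dots> = (vB B - real_of_int r * real_of_int (B$1$2) / real s) * (vB B + real_of_int r * real_of_int (B$1$2) / real s)
      - real_of_int (B$1$2) * (real_of_int (B$1$2) * (real p / real q - real_of_int r ^ 2 / real s ^ 2))"
    by (subst a, subst d, subst c') (rule refl)
  also have "\<dots> = vB B ^ 2 - real_of_int (B$1$2) ^ 2 * (real p / real q)"
    by (simp add: power2_eq_square algebra_simps diff_divide_distrib)
  finally show "real_of_int (det B) = vB B ^ 2 - NN * uB B ^ 2" using nu by simp
qed

lemma uB_int:
  assumes c: "cond \<alpha> B"
  shows "\<exists>U. uB B = real_of_int U \<and> B$1$2 * D1 = U * (int q * int s ^ 2)"
proof -
  define b where "b = B$1$2"
  have s1: "int s * (B$1$1 - B$2$2) = - 2 * r * b" using cond_struct(1)[OF c] by (simp add: b_def)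
  have "r * (2 * b) = - (int s * (B$1$1 - B$2$2))" using s1 by (simp add: algebra_simps)
  then have "int s dvd r * (2 * b)" by simp
  moreover have "coprime (int s) r" using cop_rs by (simp add: coprime_iff_gcd_eq_1 gcd.commute)
  ultimately have "int s dvd 2 * b" using coprime_dvd_mult_right_iff by blast
  then obtain t where t: "2 * b = int s * t" by blast
  have "b * (2 * int q * int s) = (2 * b) * (int q * int s)" by (simp add: algebra_simps)
  also have "\<dots> = int s * t * (int q * int s)" using t by simp
  also have "\<dots> = int q * int s ^ 2 * t" by (simp add: power2_eq_square algebra_simps)
  finally have d1': "b * (2 * int q * int s) = int q * int s ^ 2 * t" .
  have d1: "int q * int s ^ 2 dvd b * (2 * int q * int s)" unfolding d1' by (rule dvd_triv_left)
  have d2: "int q * int s ^ 2 dvd b * X0" using cond_struct(2)[OF c] by (simp add: b_def)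
  have "int q * int s ^ 2 dvd gcd (b * X0) (b * (2 * int q * int s))" using d1 d2 by simp
  also have "gcd (b * X0) (b * (2 * int q * int s)) = \<bar>b\<bar> * D1"
    by (simp add: gcd_mult_distrib_int D1_def d1f_def X0_def)
  finally have "int q * int s ^ 2 dvd \<bar>b * D1\<bar>" using D1_pos by (simp add: abs_mult)
  then have "int q * int s ^ 2 dvd b * D1" by simp
  then obtain U where U: "b * D1 = int q * int s ^ 2 * U" by blast
  have "uB B = real_of_int U"
  proof -
    have "real_of_int b * dd = real q * real s ^ 2 * real_of_int U"
      using arg_cong[OF U, of real_of_int] by (simp add: dd_def)
    then show ?thesis using q_pos s_pos by (simp add: uB_def b_def field_simps)
  qed
  then show ?thesis using U by (auto simp: b_def mult.commute)
qed

lemma vB_int: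
  assumes c: "cond \<alpha> B" and dv: "D1 dvd int q * int s"
  shows "vB B \<in> \<int>"
proof -
  obtain U where U: "B$1$2 * D1 = U * (int q * int s ^ 2)" using uB_int[OF c] by blast
  obtain w where w: "int q * int s = D1 * w" using dv by blast
  have s1: "int s * (B$1$1 - B$2$2) = - 2 * r * B$1$2" using cond_struct(1)[OF c] .
  have "int s * D1 * (B$1$1 - B$2$2) = int s * D1 * (- 2 * r * U * w)"
  proof -
    have "int s * D1 * (B$1$1 - B$2$2) = D1 * (int s * (B$1$1 - B$2$2))" by (simp add: algebra_simps)
    also have "\<dots> = - 2 * r * (B$1$2 * D1)" unfolding s1 by (simp add: algebra_simps)
    also have "\<dots> = - 2 * r * U * (int q * int s) * int s" using U by (simp add: power2_eq_square algebra_simps)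
    also have "\<dots> = int s * D1 * (- 2 * r * U * w)" using w by (simp add: algebra_simps)
    finally show ?thesis .
  qed
  then have "int s * D1 = 0 \<or> B$1$1 - B$2$2 = - 2 * r * U * w" by (simp only: mult_cancel_left)
  then have "B$1$1 - B$2$2 = - 2 * r * U * w" using s_pos D1_pos by auto
  then have "B$1$1 + B$2$2 = 2 * (B$2$2 - r * U * w)" by (simp add: algebra_simps)
  then have "real_of_int (B$1$1) + real_of_int (B$2$2) = 2 * real_of_int (B$2$2 - r * U * w)"
    by (metis of_int_add of_int_mult of_int_numeral)
  then have "vB B = real_of_int (B$2$2 - r * U * w)" unfolding vB_def by simp
  then show ?thesis by simp
qed

lemma pell_of_B:
  assumes G: "B \<in> GL2Z" and c: "cond \<alpha> B" and l: "lam \<alpha> B > 1" and h: "h > 0"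
    and hv: "real h * vB B \<in> \<int>"
  shows "\<exists>X Y. X > 0 \<and> Y > 0 \<and> real_of_int X ^ 2 - (real h ^ 2 * NN) * real_of_int Y ^ 2 = real h ^ 2 * real_of_int (det B)
          \<and> lam \<alpha> B = (real_of_int X + real_of_int Y * (real h * \<rho>)) / real h"
proof -
  obtain U where U: "uB B = real_of_int U" using uB_int[OF c] by blast
  obtain X where X: "real h * vB B = real_of_int X" using hv by (metis Ints_cases)
  define v where "v = vB B"
  define u where "u = uB B"
  have lam: "lam \<alpha> B = v + K * u * \<rho>" and dt: "real_of_int (det B) = v ^ 2 - NN * u ^ 2"
    using B_facts[OF c] by (simp_all add: v_def u_def)
  define l' where "l' = v - K * u * \<rho>"
  have prod: "lam \<alpha> B * l' = real_of_int (det B)"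
    unfolding lam l'_def dt using k2 rho_sq by (simp add: power2_eq_square algebra_simps)
  have "\<bar>real_of_int (det B)\<bar> = 1" using G by (simp add: GL2Z_def)
  moreover have "\<bar>l'\<bar> * lam \<alpha> B = \<bar>lam \<alpha> B * l'\<bar>" using l by (simp add: abs_mult)
  ultimately have "\<bar>l'\<bar> * lam \<alpha> B = 1" using prod by simp
  then have "\<bar>l'\<bar> = 1 / lam \<alpha> B" using l by (simp add: field_simps)
  then have al: "\<bar>l'\<bar> < 1" using l by simp
  have vpos: "v > 0" using al l lam l'_def by linarith
  have kpos: "K * u * \<rho> > 0" using al l lam l'_def by linarith
  then have Ku: "K * u > 0" using rho_pos by (simp add: zero_less_mult_iff)
  have absu: "\<bar>u\<bar> = K * u" using Ku k by auto
  define Y where "Y = \<bar>U\<bar>"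
  have Ypos: "Y > 0" using Ku U Y_def by (auto simp: u_def)
  have Yu: "real_of_int Y = K * u" using absu U Y_def by (simp add: u_def)
  have "0 < real h * vB B" using vpos h by (simp add: v_def)
  then have "real_of_int X > 0" using X by simp
  then have Xpos: "X > 0" by simp
  have e: "real_of_int X ^ 2 - (real h ^ 2 * NN) * real_of_int Y ^ 2 = real h ^ 2 * real_of_int (det B)"
  proof -
    have "real_of_int Y ^ 2 = u ^ 2" using Yu k2 by (simp add: power2_eq_square algebra_simps)
    then show ?thesis using X dt by (simp add: v_def power2_eq_square) (simp add: algebra_simps)
  qed
  have "lam \<alpha> B = (real_of_int X + real_of_int Y * (real h * \<rho>)) / real h"
    using lam X Yu h by (simp add: v_def field_simps)
  then show ?thesis using Xpos Ypos e by blast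
qed

end


lemma det_inv2: "A \<in> GL2Z \<Longrightarrow> det (inv2 A) = det A"
proof -
  assume A: "A \<in> GL2Z"
  have "det (inv2 A) = det A * det A * (A$1$1 * A$2$2 - A$1$2 * A$2$1)"
    by (simp add: det_2 inv2_simps algebra_simps)
  also have "\<dots> = det A" using GL2Z_det[OF A] by (simp add: det_2)
  finally show ?thesis .
qed

lemma pow_inv_left: "T \<in> GL2Z \<Longrightarrow> mat_pow (inv2 T) m ** mat_pow T m = mat 1"
proof (induction m)
  case 0 then show ?case by simp
next
  case (Suc m)
  have "mat_pow (inv2 T) (Suc m) ** mat_pow T (Suc m) = (inv2 T ** mat_pow (inv2 T) m) ** (mat_pow T m ** T)"
    by (simp only: mat_pow_Suc' mat_pow.simps)
  also have "\<dots> = inv2 T ** ((mat_pow (inv2 T) m ** mat_pow T m) ** T)"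
    by (simp only: matrix_mul_assoc)
  also have "\<dots> = mat 1" using Suc inv2_left by simp
  finally show ?case .
qed

lemma pow_inv_right: "T \<in> GL2Z \<Longrightarrow> mat_pow T m ** mat_pow (inv2 T) m = mat 1"
proof (induction m)
  case 0 then show ?case by simp
next
  case (Suc m)
  have "mat_pow T (Suc m) ** mat_pow (inv2 T) (Suc m) = (T ** mat_pow T m) ** (mat_pow (inv2 T) m ** inv2 T)"
    by (simp only: mat_pow_Suc' mat_pow.simps)
  also have "\<dots> = T ** ((mat_pow T m ** mat_pow (inv2 T) m) ** inv2 T)"
    by (simp only: matrix_mul_assoc)
  also have "\<dots> = mat 1" using Suc inv2_right by simp
  finally show ?case .
qed

lemma final_generic:
  assumes irr: "\<alpha> \<notin> \<rat>" and T: "T \<in> GL2Z" "cond \<alpha> T"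
    and S: "S = T \<or> S = inv2 T" and eps: "lam \<alpha> S > 1"
    and minimal: "\<And>B. B \<in> GL2Z \<Longrightarrow> cond \<alpha> B \<Longrightarrow> lam \<alpha> B > 1 \<Longrightarrow> lam \<alpha> B \<ge> lam \<alpha> S"
    and A: "A \<in> GL2Z"
  shows "cond \<alpha> A \<longleftrightarrow> (\<exists>n. A = mat_pow T n \<or> A ** mat_pow T n = mat 1)"
proof
  assume cA: "cond \<alpha> A"
  have SG: "S \<in> GL2Z" "cond \<alpha> S" using S T inv2_GL cond_inv2 by auto
  obtain m where m: "A = mat_pow S m \<or> A ** mat_pow S m = mat 1"
    using descent[OF irr SG eps minimal A cA] by blast
  show "\<exists>n. A = mat_pow T n \<or> A ** mat_pow T n = mat 1"
  proof (cases "S = T")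
    case True then show ?thesis using m by blast
  next
    case False
    then have S': "S = inv2 T" using S by blast
    show ?thesis
    proof (cases "A = mat_pow S m")
      case True
      then have "A ** mat_pow T m = mat 1" using pow_inv_left[OF T(1)] S' by simp
      then show ?thesis by blast
    next
      case False
      then have e: "A ** mat_pow (inv2 T) m = mat 1" using m S' by simp
      have "A = A ** (mat_pow (inv2 T) m ** mat_pow T m)" using pow_inv_left[OF T(1)] by simp
      also have "\<dots> = mat_pow T m" by (simp add: matrix_mul_assoc e)
      finally show ?thesis by blast
    qed
  qed
next
  assume "\<exists>n. A = mat_pow T n \<or> A ** mat_pow T n = mat 1"
  then obtain n where n: "A = mat_pow T n \<or> A ** mat_pow T n = mat 1" by blast
  have P: "mat_pow T n \<in> GL2Z" "cond \<alpha> (mat_pow T n)" using mat_pow_props[OF T] by auto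
  show "cond \<alpha> A"
  proof (cases "A = mat_pow T n")
    case True then show ?thesis using P by simp
  next
    case False
    then have e: "A ** mat_pow T n = mat 1" using n by simp
    have "A = A ** (mat_pow T n ** inv2 (mat_pow T n))" using inv2_right[OF P(1)] by simp
    also have "\<dots> = inv2 (mat_pow T n)" by (simp add: matrix_mul_assoc e)
    finally show ?thesis using cond_inv2[OF P] by simp
  qed
qed


lemma det_real_mat: "det (real_mat A) = real_of_int (det A)"
  by (simp add: det_2 real_mat_def)

context pset
begin

lemma sqrt_Mh: "sqrt (real h ^ 2 * NN) = real h * \<rho>"
  by (simp add: real_sqrt_mult sqrt_NN)

lemma T0_setup:
  assumes h: "h = 1 \<or> h = 2"
    and sol: "real_of_int x1 ^ 2 - (real h ^ 2 * NN) * real_of_int y1 ^ 2 = real_of_int e"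
    and e: "e = int h ^ 2 \<or> e = - (int h ^ 2)" and c: "c \<in> {-1, 1}"
  defines "T0 \<equiv> int_of_mat (Tm (real_of_int (c * y1)) (real_of_int x1 / real h))"
  shows "real_mat T0 = Tm (real_of_int (c * y1)) (real_of_int x1 / real h)"
    and "real_of_int (det T0) = real_of_int e / real h ^ 2"
    and "lam \<alpha> T0 = (real_of_int x1 + real_of_int c * real_of_int k * real_of_int y1 * (real h * \<rho>)) / real h"
    and "real_of_int (T0$2$1) + \<alpha> * real_of_int (T0$2$2) = \<alpha> * lam \<alpha> T0"
proof -
  let ?u = "real_of_int (c * y1)" and ?v = "real_of_int x1 / real h"
  have hpos: "real h > 0" using h by auto
  have c2: "real_of_int c * real_of_int c = 1" using c by auto
  have dt: "?v ^ 2 - NN * ?u ^ 2 = real_of_int e / real h ^ 2"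
  proof -
    have "?u ^ 2 = real_of_int y1 ^ 2" using c2 by (simp add: power2_eq_square algebra_simps)
    then show ?thesis using sol hpos by (simp add: power_divide field_simps)
  qed
  have eint: "real_of_int e / real h ^ 2 \<in> \<int>" using e h by auto
  have v2: "2 * ?v \<in> \<int>" using h by auto
  have ints: "Tm ?u ?v $i$j \<in> \<int>" for i j
    by (rule Tm_int) (use v2 dt eint in auto)
  show rm: "real_mat T0 = Tm ?u ?v" unfolding T0_def by (rule real_mat_int_of_mat[OF ints])
  have ent: "real_of_int (T0$i$j) = Tm ?u ?v $i$j" for i j
    using arg_cong[OF rm, of "\<lambda>M. M$i$j"] by (simp add: real_mat_def)
  show "real_of_int (det T0) = real_of_int e / real h ^ 2"
    using det_real_mat[of T0] rm Tm_det dt by simp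
  show "lam \<alpha> T0 = (real_of_int x1 + real_of_int c * real_of_int k * real_of_int y1 * (real h * \<rho>)) / real h"
    unfolding lam_def ent Tm_lam using hpos by (simp add: field_simps)
  show "real_of_int (T0$2$1) + \<alpha> * real_of_int (T0$2$2) = \<alpha> * lam \<alpha> T0"
    unfolding lam_def ent by (rule Tm_eig)
qed

lemma case_noneg:
  assumes h: "h = 1 \<or> h = 2" and hv: "\<And>B. cond \<alpha> B \<Longrightarrow> real h * vB B \<in> \<int>"
    and nosol: "\<not> has_int_solution (real h ^ 2 * NN) (- (int h ^ 2))"
    and fund: "fundamental_solution (real h ^ 2 * NN) (int h ^ 2) x1 y1"
    and A: "A \<in> GL2Z"
  shows "cond \<alpha> A \<longleftrightarrow> is_int_power (real_mat A) (Tm (real_of_int y1) (real_of_int x1 / real h))"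
proof -
  define \<sigma> where "\<sigma> = real h * \<rho>"
  define Mh where "Mh = real h ^ 2 * NN"
  have hpos: "real h > 0" using h by auto
  have sigpos: "\<sigma> > 0" using hpos rho_pos by (simp add: \<sigma>_def)
  have Mhpos: "Mh > 0" using hpos NN_pos by (simp add: Mh_def)
  have sqM: "sqrt Mh = \<sigma>" by (simp add: Mh_def \<sigma>_def sqrt_Mh)
  have sol: "real_of_int x1 ^ 2 - Mh * real_of_int y1 ^ 2 = real_of_int (int h ^ 2)" and xy: "x1 > 0" "y1 > 0"
    using fund by (auto simp: fundamental_solution_def Mh_def)
  define T0 where "T0 = int_of_mat (Tm (real_of_int (1 * y1)) (real_of_int x1 / real h))"
  note st = T0_setup[OF h sol[unfolded Mh_def] _ , of 1, folded T0_def]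
  have rm: "real_mat T0 = Tm (real_of_int y1) (real_of_int x1 / real h)" using st(1) by simp
  have dT: "det T0 = 1" using st(2) hpos by simp
  have lT: "lam \<alpha> T0 = (real_of_int x1 + real_of_int k * real_of_int y1 * \<sigma>) / real h"
    using st(3) by (simp add: \<sigma>_def)
  define \<epsilon> where "\<epsilon> = (real_of_int x1 + real_of_int y1 * \<sigma>) / real h"
  define \<epsilon>' where "\<epsilon>' = (real_of_int x1 - real_of_int y1 * \<sigma>) / real h"
  have prod: "\<epsilon> * \<epsilon>' = 1"
  proof -
    have "(real_of_int y1 * \<sigma>)^2 = Mh * real_of_int y1 ^ 2" using sqM Mhpos
      by (metis power_mult_distrib real_sqrt_pow2 less_imp_le mult.commute)
    then show ?thesis using sol hpos unfolding \<epsilon>_def \<epsilon>'_def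
      by (simp add: power2_eq_square field_simps)
  qed
  have "0 < real_of_int x1 + real_of_int y1 * \<sigma>" using xy sigpos by (intro add_pos_pos mult_pos_pos) auto
  then have epos: "\<epsilon> > 0" using hpos by (simp add: \<epsilon>_def)
  have e'pos: "\<epsilon>' > 0" using prod epos by (metis zero_less_mult_pos zero_less_one)
  have gt: "\<epsilon> > \<epsilon>'" using xy sigpos hpos by (simp add: \<epsilon>_def \<epsilon>'_def divide_strict_right_mono)
  have e1: "\<epsilon> > 1"
  proof (rule ccontr)
    assume "\<not> \<epsilon> > 1"
    then have "\<epsilon> * \<epsilon>' \<le> 1 * \<epsilon>'" using e'pos by (intro mult_right_mono) auto
    moreover have "\<epsilon>' < 1" using gt \<open>\<not> \<epsilon> > 1\<close> by linarith
    ultimately show False using prod by simp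
  qed
  have lT': "lam \<alpha> T0 = (if k = 1 then \<epsilon> else \<epsilon>')"
    using k lT by (auto simp: \<epsilon>_def \<epsilon>'_def)
  have TG: "T0 \<in> GL2Z" using dT by (simp add: GL2Z_def)
  have Tc: "cond \<alpha> T0" using st(4) lT' epos e'pos by (simp add: cond_lam)
  define S where "S = (if k = 1 then T0 else inv2 T0)"
  have SS: "S = T0 \<or> S = inv2 T0" by (simp add: S_def)
  have lS: "lam \<alpha> S = \<epsilon>"
  proof (cases "k = 1")
    case True then show ?thesis using lT' by (simp add: S_def)
  next
    case False
    then have "lam \<alpha> S = 1 / \<epsilon>'" using lT' lam_inv2[OF TG Tc] by (simp add: S_def)
    also have "\<dots> = \<epsilon>" using prod e'pos by (simp add: field_simps)
    finally show ?thesis .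
  qed
  have minimal: "lam \<alpha> B \<ge> lam \<alpha> S" if B: "B \<in> GL2Z" "cond \<alpha> B" "lam \<alpha> B > 1" for B
  proof -
    obtain X Y where XY: "X > 0" "Y > 0"
      "real_of_int X ^ 2 - Mh * real_of_int Y ^ 2 = real h ^ 2 * real_of_int (det B)"
      "lam \<alpha> B = (real_of_int X + real_of_int Y * \<sigma>) / real h"
      using pell_of_B[OF B _ hv[OF B(2)]] hpos unfolding Mh_def \<sigma>_def by auto
    have "det B = 1 \<or> det B = -1" using B(1) by (auto simp: GL2Z_def abs_if split: if_splits)
    moreover have "det B \<noteq> -1"
    proof
      assume "det B = -1"
      then have "real_of_int X ^ 2 - Mh * real_of_int Y ^ 2 = real_of_int (- (int h ^ 2))" using XY(3) by simp
      then show False using nosol unfolding has_int_solution_def Mh_def by blast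
    qed
    ultimately have "det B = 1" by blast
    then have "real_of_int X ^ 2 - Mh * real_of_int Y ^ 2 = real_of_int (int h ^ 2)" using XY(3) by simp
    from fund_le[OF Mhpos fund[folded Mh_def] XY(1,2) this]
    have "real_of_int x1 + real_of_int y1 * \<sigma> \<le> real_of_int X + real_of_int Y * \<sigma>" using sqM by simp
    then show ?thesis unfolding lS XY(4) \<epsilon>_def using hpos by (simp add: divide_right_mono)
  qed
  have "cond \<alpha> A \<longleftrightarrow> (\<exists>n. A = mat_pow T0 n \<or> A ** mat_pow T0 n = mat 1)"
    by (rule final_generic[OF alpha_irr TG Tc SS _ minimal A]) (use lS e1 in auto)
  also have "\<dots> \<longleftrightarrow> is_int_power (real_mat A) (real_mat T0)" by (simp add: is_int_power_real)
  finally show ?thesis using rm by simp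
qed

end


context pset
begin

lemma case_neg:
  assumes h: "h = 1 \<or> h = 2" and hv: "\<And>B. cond \<alpha> B \<Longrightarrow> real h * vB B \<in> \<int>"
    and fund: "fundamental_solution (real h ^ 2 * NN) (- (int h ^ 2)) x1 y1"
    and A: "A \<in> GL2Z"
  shows "cond \<alpha> A \<longleftrightarrow> is_int_power (real_mat A) (Tm (real_of_int (k * y1)) (real_of_int x1 / real h))"
proof -
  define \<sigma> where "\<sigma> = real h * \<rho>"
  define Mh where "Mh = real h ^ 2 * NN"
  have hpos: "real h > 0" using h by auto
  have sigpos: "\<sigma> > 0" using hpos rho_pos by (simp add: \<sigma>_def)
  have Mhpos: "Mh > 0" using hpos NN_pos by (simp add: Mh_def)
  have sqM: "sqrt Mh = \<sigma>" by (simp add: Mh_def \<sigma>_def sqrt_Mh)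
  have sol: "real_of_int x1 ^ 2 - Mh * real_of_int y1 ^ 2 = real_of_int (- (int h ^ 2))" and xy: "x1 > 0" "y1 > 0"
    using fund by (auto simp: fundamental_solution_def Mh_def)
  define T0 where "T0 = int_of_mat (Tm (real_of_int (k * y1)) (real_of_int x1 / real h))"
  note st = T0_setup[OF h sol[unfolded Mh_def] _ k, folded T0_def]
  have rm: "real_mat T0 = Tm (real_of_int (k * y1)) (real_of_int x1 / real h)" using st(1) by simp
  have dT: "det T0 = -1" using st(2) hpos by simp
  define \<epsilon> where "\<epsilon> = (real_of_int x1 + real_of_int y1 * \<sigma>) / real h"
  have lT: "lam \<alpha> T0 = \<epsilon>"
    using st(3) k2 by (simp add: \<sigma>_def \<epsilon>_def mult.assoc[symmetric])
  have sq: "(real_of_int y1 * \<sigma>)^2 = Mh * real_of_int y1 ^ 2" using sqM Mhpos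
    by (metis power_mult_distrib real_sqrt_pow2 less_imp_le mult.commute)
  have "real_of_int x1 ^ 2 > 0" using xy by simp
  moreover have "real_of_int (- (int h ^ 2)) = - (real h ^ 2)" by simp
  ultimately have "(real_of_int y1 * \<sigma>)^2 > (real h)^2" unfolding sq using sol by linarith
  then have "real_of_int y1 * \<sigma> > real h" using sigpos xy hpos
    by (metis abs_of_pos mult_pos_pos of_int_0_less_iff power2_less_imp_less less_imp_le)
  then have e1: "\<epsilon> > 1" using xy hpos by (simp add: \<epsilon>_def field_simps)
  have TG: "T0 \<in> GL2Z" using dT by (simp add: GL2Z_def)
  have Tc: "cond \<alpha> T0" using st(4) lT e1 by (simp add: cond_lam)
  have minneg: "lam \<alpha> B \<ge> \<epsilon>" if B: "B \<in> GL2Z" "cond \<alpha> B" "lam \<alpha> B > 1" "det B = -1" for B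
  proof -
    obtain X Y where XY: "X > 0" "Y > 0"
      "real_of_int X ^ 2 - Mh * real_of_int Y ^ 2 = real h ^ 2 * real_of_int (det B)"
      "lam \<alpha> B = (real_of_int X + real_of_int Y * \<sigma>) / real h"
      using pell_of_B[OF B(1-3) _ hv[OF B(2)]] hpos unfolding Mh_def \<sigma>_def by auto
    then have "real_of_int X ^ 2 - Mh * real_of_int Y ^ 2 = real_of_int (- (int h ^ 2))" using B(4) by simp
    from fund_le[OF Mhpos fund[folded Mh_def] XY(1,2) this]
    have "real_of_int x1 + real_of_int y1 * \<sigma> \<le> real_of_int X + real_of_int Y * \<sigma>" using sqM by simp
    then show ?thesis unfolding XY(4) \<epsilon>_def using hpos by (simp add: divide_right_mono)
  qed
  have minimal: "lam \<alpha> B \<ge> lam \<alpha> T0" if B: "B \<in> GL2Z" "cond \<alpha> B" "lam \<alpha> B > 1" for B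
  proof (rule ccontr)
    assume "\<not> lam \<alpha> B \<ge> lam \<alpha> T0"
    then have lt: "lam \<alpha> B < \<epsilon>" using lT by simp
    have "det B = 1 \<or> det B = -1" using B(1) by (auto simp: GL2Z_def abs_if split: if_splits)
    moreover have "det B \<noteq> -1" using minneg[OF B] lt by force
    ultimately have d1: "det B = 1" by blast
    let ?B' = "T0 ** inv2 B"
    have G': "?B' \<in> GL2Z" using GL_mult[OF TG inv2_GL[OF B(1)]] .
    have c': "cond \<alpha> ?B'" and l': "lam \<alpha> ?B' = \<epsilon> * (1 / lam \<alpha> B)"
      using cond_mult[OF Tc cond_inv2[OF B(1,2)]] lam_inv2[OF B(1,2)] lT by auto
    have lpos: "lam \<alpha> B > 0" using B(3) by simp
    have "lam \<alpha> ?B' = \<epsilon> / lam \<alpha> B" using l' by simp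
    then have "lam \<alpha> ?B' > 1" using lt lpos by (simp add: less_divide_eq_1_pos)
    moreover have "det ?B' = -1" using dT d1 det_inv2[OF B(1)] by (simp add: det_mul)
    ultimately have "\<epsilon> \<le> lam \<alpha> ?B'" using minneg[OF G' c'] by blast
    then have "\<epsilon> * lam \<alpha> B \<le> \<epsilon>" using l' lpos by (simp add: field_simps)
    then show False using B(3) e1 by (simp add: mult_le_cancel_left1)
  qed
  have "cond \<alpha> A \<longleftrightarrow> (\<exists>n. A = mat_pow T0 n \<or> A ** mat_pow T0 n = mat 1)"
    by (rule final_generic[OF alpha_irr TG Tc _ _ minimal A]) (use lT e1 in auto)
  also have "\<dots> \<longleftrightarrow> is_int_power (real_mat A) (real_mat T0)" by (simp add: is_int_power_real)
  finally show ?thesis using rm by simp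
qed

end


theorem mainTheorem17:
  fixes r k :: int and p q s :: nat and \<alpha> :: real
  assumes alpha_def: "\<alpha> = real_of_int r / real s + real_of_int k * sqrt (real p / real q)"
    and alpha_pos: "\<alpha> > 0" and alpha_irr: "\<alpha> \<notin> \<rat>"
    and k: "k \<in> {-1, 1}" and s_pos: "s > 0" and q_pos: "q > 0" and s_even: "even s"
    and cop_rs: "gcd r (int s) = 1" and cop_pq: "gcd p q = 1"
  defines "d1 \<equiv> d1f p q r s"
    and "N \<equiv> real p * real q * real s ^ 4 / real_of_int (d1f p q r s) ^ 2"
    and "M \<equiv> 4 * real p * real q * real s ^ 4 / real_of_int (d1f p q r s) ^ 2"
    and "T \<equiv> Tmat (real p) (real q) (real_of_int r) (real s) (real_of_int (d1f p q r s))"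
  assumes A: "A \<in> GL2Z"
  shows
    "(d1 dvd int q * int s \<longrightarrow> \<not> has_int_solution N (-1) \<longrightarrow>
        (\<forall>x1 y1. fundamental_solution N 1 x1 y1 \<longrightarrow>
          (isometric_automorphism \<alpha> A \<longleftrightarrow>
             is_int_power (real_mat A) (T (real_of_int y1) (real_of_int x1))))) \<and>
     (d1 dvd int q * int s \<longrightarrow> has_int_solution N (-1) \<longrightarrow>
        (\<forall>x1 y1. fundamental_solution N (-1) x1 y1 \<longrightarrow>
          (isometric_automorphism \<alpha> A \<longleftrightarrow>
             is_int_power (real_mat A) (T (real_of_int (k * y1)) (real_of_int x1))))) \<and>
     (\<not> d1 dvd int q * int s \<longrightarrow> \<not> has_int_solution M (-4) \<longrightarrow>
        (\<forall>x1 y1. fundamental_solution M 4 x1 y1 \<longrightarrow>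
          (isometric_automorphism \<alpha> A \<longleftrightarrow>
             is_int_power (real_mat A) (T (real_of_int y1) (real_of_int x1 / 2))))) \<and>
     (\<not> d1 dvd int q * int s \<longrightarrow> has_int_solution M (-4) \<longrightarrow>
        (\<forall>x1 y1. fundamental_solution M (-4) x1 y1 \<longrightarrow>
          (isometric_automorphism \<alpha> A \<longleftrightarrow>
             is_int_power (real_mat A) (T (real_of_int (k * y1)) (real_of_int x1 / 2)))))"
proof -
  interpret P: pset r k p q s \<alpha>
    by unfold_locales (use alpha_def alpha_irr k s_pos q_pos s_even cop_rs in auto)
  have ch: "isometric_automorphism \<alpha> A \<longleftrightarrow> cond \<alpha> A" by (rule char[OF alpha_irr A])
  have d1: "d1 = P.D1" by (simp add: d1_def P.D1_def)
  have N1: "N = real 1 ^ 2 * P.NN" by (simp add: N_def P.NN_def P.dd_def P.D1_def)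
  have M2: "M = real 2 ^ 2 * P.NN" by (simp add: M_def P.NN_def P.dd_def P.D1_def)
  have TT: "T = P.Tm" by (simp add: T_def P.dd_def P.D1_def)
  have hv1: "real 1 * P.vB B \<in> \<int>" if "cond \<alpha> B" "d1 dvd int q * int s" for B
    using P.vB_int[OF that(1)] that(2) d1 by simp
  have hv2: "real 2 * P.vB B \<in> \<int>" for B :: "int^2^2"
  proof -
    have "real 2 * P.vB B = real_of_int (B$1$1 + B$2$2)" by (simp add: P.vB_def)
    then show ?thesis by simp
  qed
  show ?thesis
  proof (intro conjI impI allI)
    fix x1 y1
    assume dv: "d1 dvd int q * int s" and ns: "\<not> has_int_solution N (-1)" and f: "fundamental_solution N 1 x1 y1"
    have "cond \<alpha> A \<longleftrightarrow> is_int_power (real_mat A) (P.Tm (real_of_int y1) (real_of_int x1 / real 1))"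
      by (rule P.case_noneg[of 1]) (use ns f hv1[OF _ dv] A N1 in auto)
    then show "isometric_automorphism \<alpha> A \<longleftrightarrow> is_int_power (real_mat A) (T (real_of_int y1) (real_of_int x1))"
      using ch TT by simp
  next
    fix x1 y1
    assume dv: "d1 dvd int q * int s" and f: "fundamental_solution N (-1) x1 y1"
    have "cond \<alpha> A \<longleftrightarrow> is_int_power (real_mat A) (P.Tm (real_of_int (k * y1)) (real_of_int x1 / real 1))"
      by (rule P.case_neg[of 1]) (use f hv1[OF _ dv] A N1 in auto)
    then show "isometric_automorphism \<alpha> A \<longleftrightarrow> is_int_power (real_mat A) (T (real_of_int (k * y1)) (real_of_int x1))"
      using ch TT by simp
  next
    fix x1 y1
    assume ns: "\<not> has_int_solution M (-4)" and f: "fundamental_solution M 4 x1 y1"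
    have "cond \<alpha> A \<longleftrightarrow> is_int_power (real_mat A) (P.Tm (real_of_int y1) (real_of_int x1 / real 2))"
      by (rule P.case_noneg[of 2]) (use ns f hv2 A M2 in auto)
    then show "isometric_automorphism \<alpha> A \<longleftrightarrow> is_int_power (real_mat A) (T (real_of_int y1) (real_of_int x1 / 2))"
      using ch TT by simp
  next
    fix x1 y1
    assume f: "fundamental_solution M (-4) x1 y1"
    have "cond \<alpha> A \<longleftrightarrow> is_int_power (real_mat A) (P.Tm (real_of_int (k * y1)) (real_of_int x1 / real 2))"
      by (rule P.case_neg[of 2]) (use f hv2 A M2 in auto)
    then show "isometric_automorphism \<alpha> A \<longleftrightarrow> is_int_power (real_mat A) (T (real_of_int (k * y1)) (real_of_int x1 / 2))"
      using ch TT by simp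
  qed
qed


end
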